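(* Let $k,n,t$ be positive integers. Then $$\sum_{\pi\in NC^k(n)} \#\{V\in\pi : |V| = tk\} \;=\; \binom{n(k+1)-t-1}{nk-1}.$$
   Context: A partition of a finite set $S$ is a set of pairwise disjoint non-empty subsets (blocks) of $S$ whose union is $S$. A partition $\pi$ of $[N]=\{1,\dots,N\}$ is non-crossing if there are no $1\le a<b<c<d\le N$ with $a,c$ in one block and $b,d$ in a different block. $NC^k(n)$ denotes the set of non-crossing partitions of $[kn]$ all of whose blocks have size divisible by $k$. Binomial coefficients: for integers $a,b$, $\binom{a}{b}=\frac{a!}{b!(a-b)!}$ if $0\le b\le a$ and $\binom{a}{b}=0$ otherwise. *)

theory Defs
  imports Main
begin

definition is_partition :: "'a set set \<Rightarrow> 'a set \<Rightarrow> bool" where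
  "is_partition P S \<longleftrightarrow>
     (\<forall>B\<in>P. B \<noteq> {}) \<and>
     (\<forall>B\<in>P. \<forall>C\<in>P. B \<noteq> C \<longrightarrow> B \<inter> C = {}) \<and>
     \<Union>P = S"

definition non_crossing :: "nat set set \<Rightarrow> bool" where
  "non_crossing P \<longleftrightarrow>
     \<not> (\<exists>B\<in>P. \<exists>C\<in>P. B \<noteq> C \<and>
          (\<exists>a b c d. a < b \<and> b < c \<and> c < d \<and> a \<in> B \<and> c \<in> B \<and> b \<in> C \<and> d \<in> C))"

definition NCk :: "nat \<Rightarrow> nat \<Rightarrow> nat set set set" where
  "NCk k n = {P. is_partition P {1..k*n} \<and> non_crossing P \<and> (\<forall>B\<in>P. k dvd card B)}"

end

theory Submission
  imports Defs
begin

fun aa :: "nat \<Rightarrow> nat \<Rightarrow> nat \<Rightarrow> int" where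
  "aa k r 0 = 1"
| "aa k r (Suc m) = int ((m*(k+1)+k+r) choose (Suc m)) - int k * int ((m*(k+1)+k+r) choose m)"

definition HH :: "nat \<Rightarrow> nat \<Rightarrow> nat \<Rightarrow> nat \<Rightarrow> int" where
  "HH k e r m = int r * int ((m*(k+1) + r + e - 1) choose m)"

lemma aa_pascal:
  assumes "k > 0"
  shows "aa k (Suc r) (Suc m) = aa k r (Suc m) + aa k (Suc r + k) m"
proof -
  define U where "U = m*(k+1)+k+r"
  have h1: "aa k (Suc r) (Suc m) = int (U choose m) + int (U choose Suc m) - int k * int (Suc U choose m)"
  proof -
    have "m*(k+1)+k+Suc r = Suc U" by (simp add: U_def)
    thus ?thesis by simp
  qed
  have h2: "aa k r (Suc m) = int (U choose Suc m) - int k * int (U choose m)"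
    by (simp add: U_def)
  show ?thesis
  proof (cases m)
    case 0
    then show ?thesis using h1 h2 by (simp add: algebra_simps)
  next
    case (Suc m')
    have h5: "aa k (Suc r + k) m = int (U choose m) - int k * int (U choose m')"
    proof -
      have "m'*(k+1)+k+(Suc r + k) = U" using Suc by (simp add: U_def algebra_simps)
      thus ?thesis using Suc by simp
    qed
    have h6: "Suc U choose m = (U choose m') + (U choose m)" using Suc by simp
    show ?thesis using h1 h2 h5 h6 by (simp add: algebra_simps)
  qed
qed

lemma aa_zero:
  assumes "k > 0"
  shows "aa k 0 (Suc m) = 0"
proof -
  obtain k' where k: "k = Suc k'" using assms by (cases k) auto
  define X where "X = Suc (m + (m*k + k'))"
  have A: "Suc m * (X choose Suc m) = Suc (m*k+k') * (X choose m)"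
    unfolding X_def by (rule Suc_times_binomial_add)
  have B: "X = m*(k+1)+k+0" using k by (simp add: X_def)
  have C: "Suc (m*k+k') = Suc m * k" using k by simp
  have "Suc m * (X choose Suc m) = Suc m * (k * (X choose m))"
    using A C by (simp only: mult.assoc)
  hence "X choose Suc m = k * (X choose m)" by (metis mult_left_cancel nat.distinct(1))
  thus ?thesis using B by simp
qed

lemma HH_id:
  assumes "k > 0"
  shows "HH k e (Suc r) (Suc m) + aa k (r+k+Suc e) m = HH k e r (Suc m) + HH k e (Suc r + k) m + aa k (r + Suc e) (Suc m)"
proof -
  define U where "U = m*(k+1)+k+r+e"
  have h1: "HH k e (Suc r) (Suc m) = int (Suc r) * (int (U choose m) + int (U choose Suc m))"
    unfolding HH_def U_def by (simp add: algebra_simps)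
  have h2: "HH k e r (Suc m) = int r * int (U choose Suc m)"
    unfolding HH_def U_def by (cases r) (simp_all add: algebra_simps)
  have h3: "HH k e (Suc r + k) m = int (Suc r + k) * int (U choose m)"
    unfolding HH_def U_def by (simp add: algebra_simps)
  have h4: "aa k (r + Suc e) (Suc m) = int (U choose m) + int (U choose Suc m) - int k * int (Suc U choose m)"
  proof -
    have "m*(k+1)+k+(r + Suc e) = Suc U" by (simp add: U_def)
    thus ?thesis by simp
  qed
  show ?thesis
  proof (cases m)
    case 0
    then show ?thesis using h1 h2 h3 h4 by (simp add: algebra_simps)
  next
    case (Suc m')
    have h5: "aa k (r+k+Suc e) m = int (U choose m) - int k * int (U choose m')"
    proof -
      have "m'*(k+1)+k+(r+k+Suc e) = U" using Suc by (simp add: U_def algebra_simps)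
      thus ?thesis using Suc by simp
    qed
    have h6: "Suc U choose m = (U choose m') + (U choose m)" using Suc by simp
    show ?thesis using h1 h2 h3 h4 h5 h6 by (simp add: algebra_simps)
  qed
qed

definition phi :: "nat \<Rightarrow> nat \<Rightarrow> nat \<Rightarrow> int" where
  "phi k N r = (if \<exists>m. N = r + m*k then aa k r ((N-r) div k) else 0)"

definition psi :: "nat \<Rightarrow> nat \<Rightarrow> nat \<Rightarrow> nat \<Rightarrow> int" where
  "psi k e N r = (if \<exists>m. N = r + Suc e + m*k then HH k e r ((N - r - Suc e) div k) else 0)"

lemma phi_eq: "k > 0 \<Longrightarrow> phi k (r + m*k) r = aa k r m"
  unfolding phi_def by auto

lemma phi_none: "\<not> (\<exists>m. N = r + m*k) \<Longrightarrow> phi k N r = 0"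
  unfolding phi_def by auto

lemma phi_big: "N < r \<Longrightarrow> phi k N r = 0"
  unfolding phi_def by auto

lemma psi_eq: "k > 0 \<Longrightarrow> psi k e (r + Suc e + m*k) r = HH k e r m"
  unfolding psi_def by auto

lemma psi_none: "\<not> (\<exists>m. N = r + Suc e + m*k) \<Longrightarrow> psi k e N r = 0"
  unfolding psi_def by auto

lemma psi_big: "N < r + Suc e \<Longrightarrow> psi k e N r = 0"
  unfolding psi_def by auto

lemma psi_r0: "psi k e N 0 = 0"
  unfolding psi_def HH_def by auto

lemma phi_r0: assumes "k > 0" shows "phi k N 0 = (if N = 0 then 1 else 0)"
proof (cases "\<exists>m. N = m*k")
  case True
  then obtain m where m: "N = m*k" by auto
  show ?thesis
  proof (cases m)
    case 0 then show ?thesis using m phi_eq[OF assms, of 0 0] by simp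
  next
    case (Suc m') then show ?thesis using m phi_eq[OF assms, of 0 m] aa_zero[OF assms] assms by simp
  qed
next
  case False
  hence "N \<noteq> 0" by (metis mult_0)
  then show ?thesis using phi_none[of N 0 k] False by auto
qed

lemma phi_rec:
  assumes k: "k > 0"
  shows "phi k (Suc N) (Suc r) = phi k N r + phi k (Suc N) (Suc r + k)"
proof (cases "\<exists>m. N = r + m*k")
  case True
  then obtain m where m: "N = r + m*k" by auto
  have e1: "phi k (Suc N) (Suc r) = aa k (Suc r) m" using phi_eq[OF k, of "Suc r" m] m by simp
  have e2: "phi k N r = aa k r m" using phi_eq[OF k, of r m] m by simp
  show ?thesis
  proof (cases m)
    case 0
    then show ?thesis using e1 e2 m phi_big[of "Suc N" "Suc r + k" k] k by simp
  next
    case (Suc m')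
    have "Suc N = (Suc r + k) + m'*k" using m Suc by simp
    hence e3: "phi k (Suc N) (Suc r + k) = aa k (Suc r + k) m'" using phi_eq[OF k, of "Suc r + k" m'] by simp
    show ?thesis using e1 e2 e3 Suc aa_pascal[OF k] by simp
  qed
next
  case False
  have "phi k (Suc N) (Suc r) = 0"
    by (rule phi_none) (use False in auto)
  moreover have "phi k N r = 0" using False by (rule phi_none)
  moreover have "phi k (Suc N) (Suc r + k) = 0"
  proof (rule phi_none, rule notI)
    assume "\<exists>m. Suc N = Suc r + k + m * k"
    then obtain m where "Suc N = Suc r + k + m*k" by auto
    hence "N = r + Suc m * k" by simp
    thus False using False by blast
  qed
  ultimately show ?thesis by simp
qed

lemma psi_rec:
  assumes k: "k > 0"
  shows "psi k e (Suc N) (Suc r) + phi k N (r + k + Suc e) = psi k e N r + psi k e (Suc N) (Suc r + k) + phi k N (r + Suc e)"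
proof (cases "\<exists>m. N = r + Suc e + m*k")
  case True
  then obtain m where m: "N = r + Suc e + m*k" by auto
  have e1: "psi k e (Suc N) (Suc r) = HH k e (Suc r) m" using psi_eq[OF k, where r="Suc r" and e=e and m=m] m by simp
  have e2: "psi k e N r = HH k e r m" using psi_eq[OF k, where r=r and e=e and m=m] m by simp
  have e4: "phi k N (r + Suc e) = aa k (r + Suc e) m" using phi_eq[OF k, of "r + Suc e" m] m by simp
  show ?thesis
  proof (cases m)
    case 0
    then show ?thesis using e1 e2 e4 m phi_big[of N "r + k + Suc e" k] psi_big[of "Suc N" "Suc r + k" e k] k
      by (simp add: HH_def)
  next
    case (Suc m')
    have "Suc N = (Suc r + k) + Suc e + m'*k" using m Suc by simp
    hence e3: "psi k e (Suc N) (Suc r + k) = HH k e (Suc r + k) m'" using psi_eq[OF k, where r="Suc r + k" and e=e and m=m'] by simp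
    have "N = (r + k + Suc e) + m'*k" using m Suc by simp
    hence e5: "phi k N (r + k + Suc e) = aa k (r+k+Suc e) m'" using phi_eq[OF k, of "r+k+Suc e" m'] by simp
    show ?thesis using e1 e2 e3 e4 e5 Suc HH_id[OF k, of e r m'] by simp
  qed
next
  case False
  have "psi k e (Suc N) (Suc r) = 0"
    by (rule psi_none) (use False in auto)
  moreover have "psi k e N r = 0" using False by (rule psi_none)
  moreover have "psi k e (Suc N) (Suc r + k) = 0"
  proof (rule psi_none, rule notI)
    assume "\<exists>m. Suc N = Suc r + k + Suc e + m * k"
    then obtain m where "Suc N = Suc r + k + Suc e + m*k" by auto
    hence "N = r + Suc e + Suc m * k" by simp
    thus False using False by blast
  qed
  moreover have "phi k N (r + Suc e) = 0"
    by (rule phi_none) (use False in \<open>auto simp: algebra_simps\<close>)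
  moreover have "phi k N (r + k + Suc e) = 0"
  proof (rule phi_none, rule notI)
    assume "\<exists>m. N = r + k + Suc e + m * k"
    then obtain m where "N = r + k + Suc e + m*k" by auto
    hence "N = r + Suc e + Suc m * k" by simp
    thus False using False by blast
  qed
  ultimately show ?thesis by simp
qed

lemma phi_tele:
  assumes k: "k > 0"
  shows "phi k (Suc N) (Suc r) = phi k N r + (\<Sum>j\<in>{1..J}. phi k N (r + j*k)) + phi k (Suc N) (Suc r + Suc J * k)"
proof (induction J)
  case 0
  have "phi k (Suc N) (Suc r) = phi k N r + phi k (Suc N) (Suc r + k)" by (rule phi_rec[OF k])
  moreover have "Suc 0 * k = k" by simp
  moreover have "(\<Sum>j\<in>{1..0::nat}. phi k N (r + j*k)) = 0" by simp
  ultimately show ?case by (simp only: add_0_right)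
next
  case (Suc J)
  have A: "phi k (Suc N) (Suc (r + Suc J * k)) = phi k N (r + Suc J * k) + phi k (Suc N) (Suc (r + Suc J * k) + k)"
    by (rule phi_rec[OF k])
  have B: "Suc r + Suc J * k + k = Suc r + Suc (Suc J) * k" by simp
  have D: "Suc (r + Suc J * k) = Suc r + Suc J * k" by simp
  have S: "(\<Sum>j\<in>{1..Suc J}. phi k N (r + j*k)) = (\<Sum>j\<in>{1..J}. phi k N (r + j*k)) + phi k N (r + Suc J * k)"
    by simp
  from A have A': "phi k (Suc N) (Suc r + Suc J * k) = phi k N (r + Suc J * k) + phi k (Suc N) (Suc r + Suc (Suc J) * k)"
    unfolding D B .
  show ?case using Suc.IH A' S by linarith
qed

lemma phi_sum:
  assumes k: "k > 0"
  shows "phi k (Suc N) (Suc r) = phi k N r + (\<Sum>j\<in>{1..N}. phi k N (r + j*k))"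
proof -
  have "Suc N \<le> Suc N * k" using k by (metis One_nat_def Suc_leI mult_le_mono2 mult.right_neutral)
  hence "Suc N < Suc r + Suc N * k" by linarith
  hence Z: "phi k (Suc N) (Suc r + Suc N * k) = 0" by (rule phi_big)
  show ?thesis using phi_tele[OF k, of N r N] unfolding Z by linarith
qed

lemma psi_tele:
  assumes k: "k > 0"
  shows "psi k e (Suc N) (Suc r) + phi k N (r + Suc J * k + Suc e) = psi k e N r + (\<Sum>j\<in>{1..J}. psi k e N (r + j*k)) + psi k e (Suc N) (Suc r + Suc J * k) + phi k N (r + Suc e)"
proof (induction J)
  case 0
  have "psi k e (Suc N) (Suc r) + phi k N (r + k + Suc e) = psi k e N r + psi k e (Suc N) (Suc r + k) + phi k N (r + Suc e)"
    by (rule psi_rec[OF k])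
  moreover have "Suc 0 * k = k" by simp
  moreover have "(\<Sum>j\<in>{1..0::nat}. psi k e N (r + j*k)) = 0" by simp
  ultimately show ?case by (simp only: add_0_right)
next
  case (Suc J)
  have A: "psi k e (Suc N) (Suc (r + Suc J * k)) + phi k N (r + Suc J * k + k + Suc e) = psi k e N (r + Suc J * k) + psi k e (Suc N) (Suc (r + Suc J * k) + k) + phi k N (r + Suc J * k + Suc e)"
    by (rule psi_rec[OF k])
  have B: "Suc r + Suc J * k + k = Suc r + Suc (Suc J) * k" by simp
  have C: "r + Suc J * k + k + Suc e = r + Suc (Suc J) * k + Suc e" by simp
  have D: "Suc (r + Suc J * k) = Suc r + Suc J * k" by simp
  have S: "(\<Sum>j\<in>{1..Suc J}. psi k e N (r + j*k)) = (\<Sum>j\<in>{1..J}. psi k e N (r + j*k)) + psi k e N (r + Suc J * k)"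
    by simp
  from A have A': "psi k e (Suc N) (Suc r + Suc J * k) + phi k N (r + Suc (Suc J) * k + Suc e) = psi k e N (r + Suc J * k) + psi k e (Suc N) (Suc r + Suc (Suc J) * k) + phi k N (r + Suc J * k + Suc e)"
    unfolding D B C .
  show ?case using Suc.IH A' S by linarith
qed

lemma psi_sum:
  assumes k: "k > 0"
  shows "psi k e (Suc N) (Suc r) = psi k e N r + (\<Sum>j\<in>{1..N}. psi k e N (r + j*k)) + phi k N (r + Suc e)"
proof -
  have "Suc N \<le> Suc N * k" using k by (metis One_nat_def Suc_leI mult_le_mono2 mult.right_neutral)
  hence l1: "Suc N < Suc r + Suc N * k + Suc e" and l2: "N < r + Suc N * k + Suc e" by linarith+
  have Z1: "psi k e (Suc N) (Suc r + Suc N * k) = 0" using l1 by (rule psi_big)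
  have Z2: "phi k N (r + Suc N * k + Suc e) = 0" using l2 by (rule phi_big)
  show ?thesis using psi_tele[OF k, of e N r N] unfolding Z1 Z2 by linarith
qed

lemma ext_range:
  fixes E :: "nat \<Rightarrow> nat \<Rightarrow> nat \<Rightarrow> nat"
  assumes k: "k > 0" and R0: "\<And>lo N r. N < r \<Longrightarrow> E lo N r = 0" and iN: "i \<le> N"
  shows "(\<Sum>j\<in>{1..i}. E lo i (j*k)) = (\<Sum>j\<in>{1..N}. E lo i (j*k))"
proof (rule sum.mono_neutral_left)
  show "finite {1..N}" by simp
  show "{1..i} \<subseteq> {1..N}" using iN by auto
  show "\<forall>j\<in>{1..N} - {1..i}. E lo i (j * k) = 0"
  proof
    fix j assume "j \<in> {1..N} - {1..i}"
    hence "i < j" by auto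
    moreover have "j \<le> j * k" using k by simp
    ultimately have "i < j*k" by linarith
    then show "E lo i (j*k) = 0" by (rule R0)
  qed
qed

lemma L1:
  fixes E :: "nat \<Rightarrow> nat \<Rightarrow> nat \<Rightarrow> nat" and f :: "nat \<Rightarrow> nat \<Rightarrow> nat"
  assumes k: "k > 0"
    and R0: "\<And>lo N r. N < r \<Longrightarrow> E lo N r = 0"
    and R1: "\<And>lo N p q. p > 0 \<Longrightarrow> q > 0 \<Longrightarrow> E lo N (p+q) = (\<Sum>i\<in>{1..<N}. E lo i p * E (lo+i) (N-i) q)"
    and R2: "\<And>lo N. E lo (Suc N) 1 = f (Suc lo) N"
    and R3a: "\<And>lo. f lo 0 = 1"
    and R3: "\<And>lo N. N > 0 \<Longrightarrow> f lo N = (\<Sum>j\<in>{1..N}. E lo N (j*k))"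
    and r: "r > 0"
  shows "E lo (Suc N) (Suc r) = E (Suc lo) N r + (\<Sum>j\<in>{1..N}. E (Suc lo) N (r + j*k))"
proof -
  have "E lo (Suc N) (Suc r) = E lo (Suc N) (1 + r)" by simp
  also have "\<dots> = (\<Sum>i\<in>{Suc 0..<Suc N}. E lo i 1 * E (lo+i) (Suc N - i) r)"
    using R1[of 1 r lo "Suc N"] r by simp
  also have "\<dots> = (\<Sum>i\<in>{0..<N}. E lo (Suc i) 1 * E (lo + Suc i) (Suc N - Suc i) r)"
    by (rule sum.shift_bounds_Suc_ivl)
  also have "\<dots> = (\<Sum>i\<in>{0..<N}. f (Suc lo) i * E (Suc lo + i) (N - i) r)"
    using R2 by simp
  also have "\<dots> = E (Suc lo) N r + (\<Sum>j\<in>{1..N}. E (Suc lo) N (r + j*k))"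
  proof (cases N)
    case 0
    then show ?thesis using R0[of 0 r] r by simp
  next
    case (Suc N')
    have split: "{0..<N} = insert 0 {1..<N}" using Suc by auto
    have "(\<Sum>i\<in>{0..<N}. f (Suc lo) i * E (Suc lo + i) (N - i) r)
        = f (Suc lo) 0 * E (Suc lo + 0) (N - 0) r + (\<Sum>i\<in>{1..<N}. f (Suc lo) i * E (Suc lo + i) (N - i) r)"
      unfolding split by (subst sum.insert) auto
    also have "(\<Sum>i\<in>{1..<N}. f (Suc lo) i * E (Suc lo + i) (N - i) r)
        = (\<Sum>i\<in>{1..<N}. (\<Sum>j\<in>{1..N}. E (Suc lo) i (j*k)) * E (Suc lo + i) (N - i) r)"
    proof (rule sum.cong)
      fix i assume i: "i \<in> {1..<N}"
      have "i > 0" using i by simp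
      then have "f (Suc lo) i = (\<Sum>j\<in>{1..i}. E (Suc lo) i (j*k))" by (rule R3)
      also have "\<dots> = (\<Sum>j\<in>{1..N}. E (Suc lo) i (j*k))"
        using ext_range[OF k R0, where i=i and N=N] i by simp
      finally show "f (Suc lo) i * E (Suc lo + i) (N - i) r = (\<Sum>j\<in>{1..N}. E (Suc lo) i (j*k)) * E (Suc lo + i) (N - i) r"
        by simp
    qed simp
    also have "\<dots> = (\<Sum>i\<in>{1..<N}. (\<Sum>j\<in>{1..N}. E (Suc lo) i (j*k) * E (Suc lo + i) (N - i) r))"
      by (simp add: sum_distrib_right)
    also have "\<dots> = (\<Sum>j\<in>{1..N}. (\<Sum>i\<in>{1..<N}. E (Suc lo) i (j*k) * E (Suc lo + i) (N - i) r))"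
      by (rule sum.swap)
    also have "\<dots> = (\<Sum>j\<in>{1..N}. E (Suc lo) N (r + j*k))"
    proof (rule sum.cong)
      fix j assume j: "j \<in> {1..N}"
      have "j*k > 0" using j k by simp
      then have "E (Suc lo) N (j*k + r) = (\<Sum>i\<in>{1..<N}. E (Suc lo) i (j*k) * E (Suc lo + i) (N - i) r)"
        using R1 r by blast
      then show "(\<Sum>i\<in>{1..<N}. E (Suc lo) i (j*k) * E (Suc lo + i) (N - i) r) = E (Suc lo) N (r + j*k)"
        by (simp add: add.commute)
    qed simp
    finally show ?thesis using R3a by simp
  qed
  finally show ?thesis .
qed

lemma M_form:
  fixes E X :: "nat \<Rightarrow> nat \<Rightarrow> nat \<Rightarrow> nat" and M :: "nat \<Rightarrow> nat \<Rightarrow> nat"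
  assumes k: "k > 0" and t: "t > 0"
    and R0: "\<And>lo N r. N < r \<Longrightarrow> E lo N r = 0"
    and R6: "\<And>lo N. N > 0 \<Longrightarrow> M lo N = (\<Sum>j\<in>{1..N}. (if j = t then E lo N (j*k) else 0) + X lo N (j*k))"
    and N: "N > 0"
  shows "M lo N = (\<Sum>j\<in>{1..N}. X lo N (j*k)) + E lo N (t*k)"
proof -
  have "M lo N = (\<Sum>j\<in>{1..N}. (if j = t then E lo N (j*k) else 0)) + (\<Sum>j\<in>{1..N}. X lo N (j*k))"
    using R6[OF N] by (simp add: sum.distrib)
  also have "(\<Sum>j\<in>{1..N}. (if j = t then E lo N (j*k) else 0)) = (if t \<in> {1..N} then E lo N (t*k) else 0)"
    by (rule sum.delta) simp
  also have "\<dots> = E lo N (t*k)"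
  proof (cases "t \<le> N")
    case False
    moreover have "t \<le> t*k" using k by simp
    ultimately have "N < t*k" by linarith
    then show ?thesis using R0[of N "t*k" lo] by simp
  qed (use t in simp)
  finally show ?thesis by simp
qed

lemma L2:
  fixes E X :: "nat \<Rightarrow> nat \<Rightarrow> nat \<Rightarrow> nat" and f M :: "nat \<Rightarrow> nat \<Rightarrow> nat"
  assumes k: "k > 0" and t: "t > 0"
    and R0: "\<And>lo N r. N < r \<Longrightarrow> E lo N r = 0"
    and R0X: "\<And>lo N r. N < r \<Longrightarrow> X lo N r = 0"
    and R1: "\<And>lo N p q. p > 0 \<Longrightarrow> q > 0 \<Longrightarrow> E lo N (p+q) = (\<Sum>i\<in>{1..<N}. E lo i p * E (lo+i) (N-i) q)"
    and R2: "\<And>lo N. E lo (Suc N) 1 = f (Suc lo) N"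
    and R3a: "\<And>lo. f lo 0 = 1"
    and R3: "\<And>lo N. N > 0 \<Longrightarrow> f lo N = (\<Sum>j\<in>{1..N}. E lo N (j*k))"
    and R4: "\<And>lo N p q. p > 0 \<Longrightarrow> q > 0 \<Longrightarrow> X lo N (p+q) = (\<Sum>i\<in>{1..<N}. X lo i p * E (lo+i) (N-i) q + E lo i p * X (lo+i) (N-i) q)"
    and R5: "\<And>lo N. X lo (Suc N) 1 = M (Suc lo) N"
    and R6a: "\<And>lo. M lo 0 = 0"
    and R6: "\<And>lo N. N > 0 \<Longrightarrow> M lo N = (\<Sum>j\<in>{1..N}. (if j = t then E lo N (j*k) else 0) + X lo N (j*k))"
    and r: "r > 0"
  shows "X lo (Suc N) (Suc r) = X (Suc lo) N r + (\<Sum>j\<in>{1..N}. X (Suc lo) N (r + j*k)) + E (Suc lo) N (r + t*k)"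
proof -
  have "X lo (Suc N) (Suc r) = X lo (Suc N) (1 + r)" by simp
  also have "\<dots> = (\<Sum>i\<in>{Suc 0..<Suc N}. X lo i 1 * E (lo+i) (Suc N - i) r + E lo i 1 * X (lo+i) (Suc N - i) r)"
    using R4[of 1 r lo "Suc N"] r by simp
  also have "\<dots> = (\<Sum>i\<in>{0..<N}. X lo (Suc i) 1 * E (lo + Suc i) (Suc N - Suc i) r + E lo (Suc i) 1 * X (lo + Suc i) (Suc N - Suc i) r)"
    by (rule sum.shift_bounds_Suc_ivl)
  also have "\<dots> = (\<Sum>i\<in>{0..<N}. M (Suc lo) i * E (Suc lo + i) (N - i) r + f (Suc lo) i * X (Suc lo + i) (N - i) r)"
    using R2 R5 by simp
  also have "\<dots> = X (Suc lo) N r + (\<Sum>j\<in>{1..N}. X (Suc lo) N (r + j*k)) + E (Suc lo) N (r + t*k)"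
  proof (cases N)
    case 0
    then show ?thesis using R0X[of 0 r] R0[of 0 "r + t*k"] r by simp
  next
    case (Suc N')
    have split: "{0..<N} = insert 0 {1..<N}" using Suc by auto
    have "(\<Sum>i\<in>{0..<N}. M (Suc lo) i * E (Suc lo + i) (N - i) r + f (Suc lo) i * X (Suc lo + i) (N - i) r)
        = (M (Suc lo) 0 * E (Suc lo + 0) (N - 0) r + f (Suc lo) 0 * X (Suc lo + 0) (N - 0) r) + (\<Sum>i\<in>{1..<N}. M (Suc lo) i * E (Suc lo + i) (N - i) r + f (Suc lo) i * X (Suc lo + i) (N - i) r)"
      unfolding split by (subst sum.insert) auto
    also have "(\<Sum>i\<in>{1..<N}. M (Suc lo) i * E (Suc lo + i) (N - i) r + f (Suc lo) i * X (Suc lo + i) (N - i) r)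
        = (\<Sum>i\<in>{1..<N}. ((\<Sum>j\<in>{1..N}. X (Suc lo) i (j*k)) + E (Suc lo) i (t*k)) * E (Suc lo + i) (N - i) r + (\<Sum>j\<in>{1..N}. E (Suc lo) i (j*k)) * X (Suc lo + i) (N - i) r)"
    proof (rule sum.cong)
      fix i assume i: "i \<in> {1..<N}"
      have i0: "i > 0" using i by simp
      have "M (Suc lo) i = (\<Sum>j\<in>{1..i}. X (Suc lo) i (j*k)) + E (Suc lo) i (t*k)"
        by (rule M_form[OF k t R0 R6 i0])
      also have "(\<Sum>j\<in>{1..i}. X (Suc lo) i (j*k)) = (\<Sum>j\<in>{1..N}. X (Suc lo) i (j*k))"
        using ext_range[OF k R0X, where i=i and N=N] i by simp
      finally have A: "M (Suc lo) i = (\<Sum>j\<in>{1..N}. X (Suc lo) i (j*k)) + E (Suc lo) i (t*k)" .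
      have "i > 0" using i by simp
      then have "f (Suc lo) i = (\<Sum>j\<in>{1..i}. E (Suc lo) i (j*k))" by (rule R3)
      also have "\<dots> = (\<Sum>j\<in>{1..N}. E (Suc lo) i (j*k))"
        using ext_range[OF k R0, where i=i and N=N] i by simp
      finally show "M (Suc lo) i * E (Suc lo + i) (N - i) r + f (Suc lo) i * X (Suc lo + i) (N - i) r = ((\<Sum>j\<in>{1..N}. X (Suc lo) i (j*k)) + E (Suc lo) i (t*k)) * E (Suc lo + i) (N - i) r + (\<Sum>j\<in>{1..N}. E (Suc lo) i (j*k)) * X (Suc lo + i) (N - i) r"
        using A by simp
    qed simp
    also have "\<dots> = (\<Sum>j\<in>{1..N}. (\<Sum>i\<in>{1..<N}. X (Suc lo) i (j*k) * E (Suc lo + i) (N - i) r + E (Suc lo) i (j*k) * X (Suc lo + i) (N - i) r))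
          + (\<Sum>i\<in>{1..<N}. E (Suc lo) i (t*k) * E (Suc lo + i) (N - i) r)"
    proof -
      have "(\<Sum>i\<in>{1..<N}. ((\<Sum>j\<in>{1..N}. X (Suc lo) i (j*k)) + E (Suc lo) i (t*k)) * E (Suc lo + i) (N - i) r + (\<Sum>j\<in>{1..N}. E (Suc lo) i (j*k)) * X (Suc lo + i) (N - i) r)
         = (\<Sum>i\<in>{1..<N}. (\<Sum>j\<in>{1..N}. X (Suc lo) i (j*k) * E (Suc lo + i) (N - i) r + E (Suc lo) i (j*k) * X (Suc lo + i) (N - i) r) + E (Suc lo) i (t*k) * E (Suc lo + i) (N - i) r)"
        by (simp add: sum_distrib_right sum.distrib distrib_right)
      also have "\<dots> = (\<Sum>i\<in>{1..<N}. (\<Sum>j\<in>{1..N}. X (Suc lo) i (j*k) * E (Suc lo + i) (N - i) r + E (Suc lo) i (j*k) * X (Suc lo + i) (N - i) r)) + (\<Sum>i\<in>{1..<N}. E (Suc lo) i (t*k) * E (Suc lo + i) (N - i) r)"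
        by (rule sum.distrib)
      also have "(\<Sum>i\<in>{1..<N}. (\<Sum>j\<in>{1..N}. X (Suc lo) i (j*k) * E (Suc lo + i) (N - i) r + E (Suc lo) i (j*k) * X (Suc lo + i) (N - i) r))
          = (\<Sum>j\<in>{1..N}. (\<Sum>i\<in>{1..<N}. X (Suc lo) i (j*k) * E (Suc lo + i) (N - i) r + E (Suc lo) i (j*k) * X (Suc lo + i) (N - i) r))"
        by (rule sum.swap)
      finally show ?thesis .
    qed
    also have "(\<Sum>j\<in>{1..N}. (\<Sum>i\<in>{1..<N}. X (Suc lo) i (j*k) * E (Suc lo + i) (N - i) r + E (Suc lo) i (j*k) * X (Suc lo + i) (N - i) r))
        = (\<Sum>j\<in>{1..N}. X (Suc lo) N (r + j*k))"
    proof (rule sum.cong)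
      fix j assume j: "j \<in> {1..N}"
      have "j*k > 0" using j k by simp
      then have "X (Suc lo) N (j*k + r) = (\<Sum>i\<in>{1..<N}. X (Suc lo) i (j*k) * E (Suc lo + i) (N - i) r + E (Suc lo) i (j*k) * X (Suc lo + i) (N - i) r)"
        using R4 r by blast
      then show "(\<Sum>i\<in>{1..<N}. X (Suc lo) i (j*k) * E (Suc lo + i) (N - i) r + E (Suc lo) i (j*k) * X (Suc lo + i) (N - i) r) = X (Suc lo) N (r + j*k)"
        by (simp add: add.commute)
    qed simp
    also have "(\<Sum>i\<in>{1..<N}. E (Suc lo) i (t*k) * E (Suc lo + i) (N - i) r) = E (Suc lo) N (r + t*k)"
    proof -
      have "t*k > 0" using t k by simp
      then have "E (Suc lo) N (t*k + r) = (\<Sum>i\<in>{1..<N}. E (Suc lo) i (t*k) * E (Suc lo + i) (N - i) r)"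
        using R1 r by blast
      then show ?thesis by (simp add: add.commute)
    qed
    finally show ?thesis using R3a R6a by simp
  qed
  finally show ?thesis .
qed

lemma alg_main:
  fixes E X :: "nat \<Rightarrow> nat \<Rightarrow> nat \<Rightarrow> nat" and f M :: "nat \<Rightarrow> nat \<Rightarrow> nat"
  assumes k: "k > 0" and t: "t > 0"
    and R0: "\<And>lo N r. N < r \<Longrightarrow> E lo N r = 0"
    and R0X: "\<And>lo N r. N < r \<Longrightarrow> X lo N r = 0"
    and R1: "\<And>lo N p q. p > 0 \<Longrightarrow> q > 0 \<Longrightarrow> E lo N (p+q) = (\<Sum>i\<in>{1..<N}. E lo i p * E (lo+i) (N-i) q)"
    and R2: "\<And>lo N. E lo (Suc N) 1 = f (Suc lo) N"
    and R3a: "\<And>lo. f lo 0 = 1"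
    and R3: "\<And>lo N. N > 0 \<Longrightarrow> f lo N = (\<Sum>j\<in>{1..N}. E lo N (j*k))"
    and R4: "\<And>lo N p q. p > 0 \<Longrightarrow> q > 0 \<Longrightarrow> X lo N (p+q) = (\<Sum>i\<in>{1..<N}. X lo i p * E (lo+i) (N-i) q + E lo i p * X (lo+i) (N-i) q)"
    and R5: "\<And>lo N. X lo (Suc N) 1 = M (Suc lo) N"
    and R6a: "\<And>lo. M lo 0 = 0"
    and R6: "\<And>lo N. N > 0 \<Longrightarrow> M lo N = (\<Sum>j\<in>{1..N}. (if j = t then E lo N (j*k) else 0) + X lo N (j*k))"
  shows "\<forall>lo r. r > 0 \<longrightarrow> int (E lo N r) = phi k N r \<and> int (X lo N r) = psi k (t*k - 1) N r"
proof (induction N)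
  case 0
  show ?case
  proof (intro allI impI)
    fix lo r :: nat assume r: "r > 0"
    show "int (E lo 0 r) = phi k 0 r \<and> int (X lo 0 r) = psi k (t*k - 1) 0 r"
      using R0[OF r] R0X[OF r] phi_big[OF r] psi_big[of 0 r "t*k - 1" k] r by simp
  qed
next
  case (Suc N)
  define e where "e = t*k - 1"
  have Se: "Suc e = t*k" using k t by (simp add: e_def)
  have IHE: "\<And>lo r. r > 0 \<Longrightarrow> int (E lo N r) = phi k N r" using Suc.IH by blast
  have IHX: "\<And>lo r. r > 0 \<Longrightarrow> int (X lo N r) = psi k e N r" using Suc.IH by (simp add: e_def)
  have sumE: "\<And>lo g. (\<Sum>j\<in>{1..N}. int (E lo N (g + j*k))) = (\<Sum>j\<in>{1..N}. phi k N (g + j*k))"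
    by (rule sum.cong) (use k IHE in auto)
  have sumX: "\<And>lo g. (\<Sum>j\<in>{1..N}. int (X lo N (g + j*k))) = (\<Sum>j\<in>{1..N}. psi k e N (g + j*k))"
    by (rule sum.cong) (use k IHX in auto)
  show ?case unfolding e_def[symmetric]
  proof (intro allI impI)
    fix lo r :: nat assume r: "r > 0"
    then obtain r' where r': "r = Suc r'" by (cases r) auto
    show "int (E lo (Suc N) r) = phi k (Suc N) r \<and> int (X lo (Suc N) r) = psi k e (Suc N) r"
    proof (cases "r' = 0")
      case True
      show ?thesis
      proof (cases "N = 0")
        case True
        have "phi k (Suc 0) (Suc 0) = phi k 0 0" using phi_sum[OF k, of 0 0] by simp
        moreover have "psi k e (Suc 0) (Suc 0) = 0"
          using psi_sum[OF k, of e 0 0] psi_r0[of k e 0] phi_big[of 0 "0 + Suc e" k] by simp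
        ultimately show ?thesis using \<open>r' = 0\<close> r' True R2 R3a R5 R6a phi_r0[OF k] by simp
      next
        case False
        hence N0: "N > 0" by simp
        have "int (E lo (Suc N) r) = int (f (Suc lo) N)" using R2 r' True by simp
        also have "\<dots> = (\<Sum>j\<in>{1..N}. int (E (Suc lo) N (0 + j*k)))" using R3[OF N0] by simp
        also have "\<dots> = (\<Sum>j\<in>{1..N}. phi k N (0 + j*k))" by (rule sumE)
        also have "\<dots> = phi k (Suc N) (Suc 0)" using phi_sum[OF k, of N 0] phi_r0[OF k, of N] N0 by simp
        finally have A: "int (E lo (Suc N) r) = phi k (Suc N) r" using r' True by simp
        have "int (X lo (Suc N) r) = int (M (Suc lo) N)" using R5 r' True by simp
        also have "\<dots> = (\<Sum>j\<in>{1..N}. int (X (Suc lo) N (0 + j*k))) + int (E (Suc lo) N (t*k))"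
        proof -
          have "M (Suc lo) N = (\<Sum>j\<in>{1..N}. X (Suc lo) N (j*k)) + E (Suc lo) N (t*k)"
            by (rule M_form[OF k t R0 R6 N0])
          then show ?thesis by simp
        qed
        also have "\<dots> = (\<Sum>j\<in>{1..N}. psi k e N (0 + j*k)) + phi k N (0 + Suc e)"
          using sumX[of "Suc lo" 0] IHE[of "t*k" "Suc lo"] Se k t by simp
        also have "\<dots> = psi k e (Suc N) (Suc 0)" using psi_sum[OF k, of e N 0] psi_r0[of k e N] by simp
        finally show ?thesis using A r' True by simp
      qed
    next
      case False
      hence r0: "r' > 0" by simp
      have "int (E lo (Suc N) r) = int (E (Suc lo) N r') + (\<Sum>j\<in>{1..N}. int (E (Suc lo) N (r' + j*k)))"
        using L1[OF k R0 R1 R2 R3a R3 r0, of lo N] r' by simp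
      also have "\<dots> = phi k (Suc N) r" using IHE[OF r0] sumE phi_sum[OF k, of N r'] r' by simp
      finally have A: "int (E lo (Suc N) r) = phi k (Suc N) r" .
      have "int (X lo (Suc N) r) = int (X (Suc lo) N r') + (\<Sum>j\<in>{1..N}. int (X (Suc lo) N (r' + j*k))) + int (E (Suc lo) N (r' + t*k))"
        using L2[OF k t R0 R0X R1 R2 R3a R3 R4 R5 R6a R6 r0, of lo N] r' by simp
      also have "\<dots> = psi k e (Suc N) r"
        using IHX[OF r0] sumX IHE[of "r' + t*k" "Suc lo"] r0 psi_sum[OF k, of e N r'] r' Se by simp
      finally show ?thesis using A by simp
    qed
  qed
qed

lemma ncD:
  assumes "non_crossing P" "B \<in> P" "C \<in> P" "B \<noteq> C" "a < b" "b < c" "c < d"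
    "a \<in> B" "c \<in> B" "b \<in> C" "d \<in> C"
  shows False
proof -
  from assms(1) have H: "\<not> (\<exists>B\<in>P. \<exists>C\<in>P. B \<noteq> C \<and> (\<exists>a b c d. a < b \<and> b < c \<and> c < d \<and> a \<in> B \<and> c \<in> B \<and> b \<in> C \<and> d \<in> C))"
    unfolding non_crossing_def .
  show False
    apply (rule notE[OF H])
    apply (rule bexI[OF _ assms(2)])
    apply (rule bexI[OF _ assms(3)])
    apply (rule conjI[OF assms(4)])
    apply (rule exI[of _ a], rule exI[of _ b], rule exI[of _ c], rule exI[of _ d])
    using assms(5-11) by simp
qed

lemma ncI:
  assumes "\<And>B C a b c d. B \<in> P \<Longrightarrow> C \<in> P \<Longrightarrow> B \<noteq> C \<Longrightarrow> a < b \<Longrightarrow> b < c \<Longrightarrow> c < d \<Longrightarrow>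
    a \<in> B \<Longrightarrow> c \<in> B \<Longrightarrow> b \<in> C \<Longrightarrow> d \<in> C \<Longrightarrow> False"
  shows "non_crossing P"
  unfolding non_crossing_def
proof (rule notI)
  assume "\<exists>B\<in>P. \<exists>C\<in>P. B \<noteq> C \<and> (\<exists>a b c d. a < b \<and> b < c \<and> c < d \<and> a \<in> B \<and> c \<in> B \<and> b \<in> C \<and> d \<in> C)"
  then obtain B C a b c d where "B \<in> P" "C \<in> P" "B \<noteq> C" "a < b" "b < c" "c < d" "a \<in> B" "c \<in> B" "b \<in> C" "d \<in> C"
    by metis
  then show False by (rule assms)
qed

lemma part_sub: "is_partition P S \<Longrightarrow> V \<in> P \<Longrightarrow> V \<subseteq> S"
  unfolding is_partition_def by blast

lemma part_ne: "is_partition P S \<Longrightarrow> V \<in> P \<Longrightarrow> V \<noteq> {}"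
  unfolding is_partition_def by blast

lemma part_disj: "is_partition P S \<Longrightarrow> U \<in> P \<Longrightarrow> W \<in> P \<Longrightarrow> U \<noteq> W \<Longrightarrow> U \<inter> W = {}"
  unfolding is_partition_def by blast

lemma part_uniq: "is_partition P S \<Longrightarrow> U \<in> P \<Longrightarrow> W \<in> P \<Longrightarrow> x \<in> U \<Longrightarrow> x \<in> W \<Longrightarrow> U = W"
  unfolding is_partition_def by blast

lemma part_cover: "is_partition P S \<Longrightarrow> x \<in> S \<Longrightarrow> \<exists>V\<in>P. x \<in> V"
  unfolding is_partition_def by blast

lemma part_union: "is_partition P S \<Longrightarrow> \<Union>P = S"
  unfolding is_partition_def by blast

lemma part_finite: "is_partition P S \<Longrightarrow> finite S \<Longrightarrow> finite P"
proof -
  assume "is_partition P S" "finite S"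
  then have "P \<subseteq> Pow S" unfolding is_partition_def by auto
  then show "finite P" using \<open>finite S\<close> by (rule finite_subset[OF _ finite_Pow_iff[THEN iffD2]])
qed

lemma nc_subset:
  assumes "non_crossing P" "Q \<subseteq> P" shows "non_crossing Q"
proof (rule ncI)
  fix B C a b c d
  assume h: "B \<in> Q" "C \<in> Q" "B \<noteq> C" "a < b" "b < c" "c < d" "a \<in> B" "c \<in> B" "b \<in> C" "d \<in> C"
  have "B \<in> P" "C \<in> P" using h(1,2) assms(2) by auto
  then show False using ncD[OF assms(1) _ _ h(3-10)] by blast
qed

definition restr :: "nat set set \<Rightarrow> nat set \<Rightarrow> nat set set" where
  "restr P A = (\<lambda>V. V \<inter> A) ` P - {{}}"

lemma nc_restr:
  assumes "non_crossing P"
  shows "non_crossing (restr P A)"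
proof (rule ncI)
  fix B C a b c d
  assume "B \<in> restr P A" "C \<in> restr P A" "B \<noteq> C" "a < b" "b < c" "c < d" "a \<in> B" "c \<in> B" "b \<in> C" "d \<in> C"
  then obtain V W where "V \<in> P" "W \<in> P" "B = V \<inter> A" "C = W \<inter> A"
    unfolding restr_def by blast
  then show False using ncD[OF assms \<open>V \<in> P\<close> \<open>W \<in> P\<close>] \<open>B \<noteq> C\<close> \<open>a < b\<close> \<open>b < c\<close> \<open>c < d\<close>
      \<open>a \<in> B\<close> \<open>c \<in> B\<close> \<open>b \<in> C\<close> \<open>d \<in> C\<close> by blast
qed

lemma part_restr:
  assumes "is_partition P S"
  shows "is_partition (restr P A) (S \<inter> A)"
  using assms unfolding is_partition_def restr_def by blast

lemma nc_sep:
  assumes p: "is_partition P S" and nc: "non_crossing P" and B: "B \<in> P" "lo \<in> B"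
    and lo: "\<forall>x\<in>S. lo \<le> x" and b: "b \<in> B" and V: "V \<in> P" "V \<noteq> B"
  shows "V \<subseteq> {..<b} \<or> V \<subseteq> {b<..}"
proof (rule ccontr)
  assume "\<not> (V \<subseteq> {..<b} \<or> V \<subseteq> {b<..})"
  then obtain x y where x: "x \<in> V" "\<not> x < b" and y: "y \<in> V" "\<not> b < y" by auto
  have dj: "V \<inter> B = {}" using part_disj[OF p V(1) B(1) V(2)] .
  have "x \<noteq> b" using x b dj by blast
  hence xb: "b < x" using x by simp
  have "y \<noteq> b" using y b dj by blast
  hence yb: "y < b" using y by simp
  have "y \<noteq> lo" using y B dj by blast
  moreover have "lo \<le> y" using lo part_sub[OF p V(1)] y by blast
  ultimately have "lo < y" by simp
  then show False using ncD[OF nc B(1) V(1)] V(2) yb xb B(2) b x(1) y(1) by metis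
qed

lemma nc_glue:
  assumes nc1: "non_crossing P1" and nc2: "non_crossing P2"
    and p1: "is_partition P1 S1" and p2: "is_partition P2 S2"
    and ord: "\<forall>x\<in>S1. \<forall>y\<in>S2. x < y"
    and B1: "B1 \<in> P1" "m1 \<in> B1" "\<forall>x\<in>S1. m1 \<le> x"
    and B2: "B2 \<in> P2" "m2 \<in> B2" "\<forall>x\<in>S2. m2 \<le> x"
  shows "non_crossing ((P1 - {B1}) \<union> (P2 - {B2}) \<union> {B1 \<union> B2})"
proof (rule ncI)
  fix U W x1 x2 x3 x4
  assume U: "U \<in> (P1 - {B1}) \<union> (P2 - {B2}) \<union> {B1 \<union> B2}" and W: "W \<in> (P1 - {B1}) \<union> (P2 - {B2}) \<union> {B1 \<union> B2}"
    and UW: "U \<noteq> W" and o: "x1 < x2" "x2 < x3" "x3 < x4" and xs: "x1 \<in> U" "x3 \<in> U" "x2 \<in> W" "x4 \<in> W"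
  have s1: "\<And>V. V \<in> P1 \<Longrightarrow> V \<subseteq> S1" using p1 by (rule part_sub)
  have s2: "\<And>V. V \<in> P2 \<Longrightarrow> V \<subseteq> S2" using p2 by (rule part_sub)
  have ordE: "\<And>x y. x \<in> S1 \<Longrightarrow> y \<in> S2 \<Longrightarrow> x < y" using ord by blast
  consider (a) "U \<in> P1 - {B1}" | (b) "U \<in> P2 - {B2}" | (c) "U = B1 \<union> B2" using U by blast
  then show False
  proof cases
    case a
    consider (a) "W \<in> P1 - {B1}" | (b) "W \<in> P2 - {B2}" | (c) "W = B1 \<union> B2" using W by blast
    then show False
    proof cases
      case a2: a
      then show False using ncD[OF nc1, of U W x1 x2 x3 x4] a UW o xs by blast
    next
      case b
      have "x3 \<in> S1" "x2 \<in> S2" using a b xs s1 s2 by blast+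
      then show False using ordE o by fastforce
    next
      case c
      have "x2 \<in> B1"
      proof (rule ccontr)
        assume "x2 \<notin> B1"
        hence "x2 \<in> S2" using c xs s2 B2 by blast
        moreover have "x3 \<in> S1" using a xs s1 by blast
        ultimately show False using ordE o by fastforce
      qed
      have dj: "U \<inter> B1 = {}" using part_disj[OF p1, of U B1] a B1 by blast
      show False
      proof (cases "x4 \<in> B1")
        case True
        then show False using ncD[OF nc1, of U B1 x1 x2 x3 x4] a B1 o xs \<open>x2 \<in> B1\<close> by blast
      next
        case False
        have "m1 \<le> x1" using B1 a xs s1 by blast
        moreover have "m1 \<noteq> x1" using dj B1 xs by blast
        ultimately have "m1 < x1" by simp
        then show False using ncD[OF nc1, of B1 U m1 x1 x2 x3] a B1 o xs \<open>x2 \<in> B1\<close> by blast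
      qed
    qed
  next
    case b
    consider (a) "W \<in> P1 - {B1}" | (b) "W \<in> P2 - {B2}" | (c) "W = B1 \<union> B2" using W by blast
    then show False
    proof cases
      case a
      have "x1 \<in> S2" "x2 \<in> S1" using a b xs s1 s2 by blast+
      then show False using ordE o by fastforce
    next
      case b2: b
      then show False using ncD[OF nc2, of U W x1 x2 x3 x4] b UW o xs by blast
    next
      case c
      have "x2 \<in> B2"
      proof (rule ccontr)
        assume "x2 \<notin> B2"
        hence "x2 \<in> S1" using c xs s1 B1 by blast
        moreover have "x1 \<in> S2" using b xs s2 by blast
        ultimately show False using ordE o by fastforce
      qed
      have "x4 \<in> B2"
      proof (rule ccontr)
        assume "x4 \<notin> B2"
        hence "x4 \<in> S1" using c xs s1 B1 by blast
        moreover have "x3 \<in> S2" using b xs s2 by blast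
        ultimately show False using ordE o by fastforce
      qed
      then show False using ncD[OF nc2, of U B2 x1 x2 x3 x4] b B2 o xs \<open>x2 \<in> B2\<close> by blast
    qed
  next
    case c
    consider (a) "W \<in> P1 - {B1}" | (b) "W \<in> P2 - {B2}" | (c) "W = B1 \<union> B2" using W by blast
    then show False
    proof cases
      case a
      have x4: "x4 \<in> S1" using a xs s1 by blast
      have "x3 \<in> B1"
      proof (rule ccontr)
        assume "x3 \<notin> B1"
        hence "x3 \<in> S2" using c xs s2 B2 by blast
        then show False using ordE[OF x4] o by fastforce
      qed
      have "x1 \<in> B1"
      proof (rule ccontr)
        assume "x1 \<notin> B1"
        hence "x1 \<in> S2" using c xs s2 B2 by blast
        moreover have "x2 \<in> S1" using a xs s1 by blast
        ultimately show False using ordE o by fastforce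
      qed
      then show False using ncD[OF nc1, of B1 W x1 x2 x3 x4] a B1 o xs \<open>x3 \<in> B1\<close> by blast
    next
      case b
      have x2: "x2 \<in> S2" using b xs s2 by blast
      have "x3 \<in> B2"
      proof (rule ccontr)
        assume "x3 \<notin> B2"
        hence "x3 \<in> S1" using c xs s1 B1 by blast
        then show False using ordE[OF _ x2] o by fastforce
      qed
      have dj: "W \<inter> B2 = {}" using part_disj[OF p2, of W B2] b B2 by blast
      show False
      proof (cases "x1 \<in> B2")
        case True
        then show False using ncD[OF nc2, of B2 W x1 x2 x3 x4] b B2 o xs \<open>x3 \<in> B2\<close> by blast
      next
        case False
        have "m2 \<le> x2" using B2 x2 by blast
        moreover have "m2 \<noteq> x2" using dj B2 xs by blast
        ultimately have "m2 < x2" by simp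
        then show False using ncD[OF nc2, of B2 W m2 x2 x3 x4] b B2 o xs \<open>x3 \<in> B2\<close> by blast
      qed
    next
      case c2: c
      then show False using c UW by simp
    qed
  qed
qed

definition EXs :: "nat \<Rightarrow> nat \<Rightarrow> nat \<Rightarrow> nat \<Rightarrow> nat set set set" where
  "EXs k lo hi r = {P. is_partition P {lo..<hi} \<and> non_crossing P \<and>
     (\<exists>B\<in>P. lo \<in> B \<and> card B = r \<and> (\<forall>C\<in>P. C \<noteq> B \<longrightarrow> k dvd card C))}"

definition NCS :: "nat \<Rightarrow> nat set \<Rightarrow> nat set set set" where
  "NCS k S = {P. is_partition P S \<and> non_crossing P \<and> (\<forall>B\<in>P. k dvd card B)}"

definition blk :: "nat set set \<Rightarrow> nat \<Rightarrow> nat set" where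
  "blk P x = \<Union>{V\<in>P. x \<in> V}"

lemma blk_eq:
  assumes "is_partition P S" "V \<in> P" "x \<in> V"
  shows "blk P x = V"
proof -
  have "{V'\<in>P. x \<in> V'} = {V}"
    using part_uniq[OF assms(1)] assms(2,3) by blast
  then show ?thesis unfolding blk_def by simp
qed

lemma EXsE:
  assumes "P \<in> EXs k lo hi r"
  shows "is_partition P {lo..<hi}" "non_crossing P" "blk P lo \<in> P" "lo \<in> blk P lo"
    "card (blk P lo) = r" "\<And>C. C \<in> P \<Longrightarrow> C \<noteq> blk P lo \<Longrightarrow> k dvd card C"
proof -
  from assms obtain B where p: "is_partition P {lo..<hi}" and nc: "non_crossing P" and B: "B \<in> P" "lo \<in> B"
    "card B = r" "\<forall>C\<in>P. C \<noteq> B \<longrightarrow> k dvd card C"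
    unfolding EXs_def by blast
  have b: "blk P lo = B" using blk_eq[OF p B(1,2)] .
  show "is_partition P {lo..<hi}" "non_crossing P" "blk P lo \<in> P" "lo \<in> blk P lo"
    "card (blk P lo) = r" using p nc B b by simp_all
  show "\<And>C. C \<in> P \<Longrightarrow> C \<noteq> blk P lo \<Longrightarrow> k dvd card C" using B(4) b by simp
qed

lemma EXsI:
  assumes "is_partition P {lo..<hi}" "non_crossing P" "B \<in> P" "lo \<in> B" "card B = r"
    "\<And>C. C \<in> P \<Longrightarrow> C \<noteq> B \<Longrightarrow> k dvd card C"
  shows "P \<in> EXs k lo hi r"
  unfolding EXs_def using assms by blast

lemma EXs_lo: "P \<in> EXs k lo hi r \<Longrightarrow> lo < hi"
  using EXsE(1,3,4)[of P k lo hi r] part_sub[of P "{lo..<hi}"] by fastforce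

lemma exists_rank:
  fixes B :: "nat set"
  assumes "finite B" "n < card B"
  shows "\<exists>b\<in>B. card {x\<in>B. x < b} = n"
  using assms(2)
proof (induction n)
  case 0
  then have ne: "B \<noteq> {}" by auto
  have "{x\<in>B. x < Min B} = {}" using Min_le[OF assms(1)] by fastforce
  then show ?case using Min_in[OF assms(1) ne] by auto
next
  case (Suc n)
  then obtain b where b: "b \<in> B" "card {x\<in>B. x < b} = n" by auto
  have L: "{x\<in>B. x \<le> b} = insert b {x\<in>B. x < b}" using b by auto
  have cL: "card {x\<in>B. x \<le> b} = Suc n" unfolding L using b assms(1) by simp
  define R where "R = {x\<in>B. b < x}"
  have "R \<noteq> {}"
  proof
    assume "R = {}"
    then have "B = {x\<in>B. x \<le> b}" unfolding R_def by auto
    then show False using cL Suc.prems by simp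
  qed
  have fR: "finite R" using assms(1) unfolding R_def by simp
  define b' where "b' = Min R"
  have b'R: "b' \<in> R" using Min_in[OF fR \<open>R \<noteq> {}\<close>] unfolding b'_def .
  have "{x\<in>B. x < b'} = {x\<in>B. x \<le> b}"
  proof (intro set_eqI iffI)
    fix x assume x: "x \<in> {x\<in>B. x < b'}"
    show "x \<in> {x\<in>B. x \<le> b}"
    proof (rule ccontr)
      assume "x \<notin> {x\<in>B. x \<le> b}"
      then have "x \<in> R" using x unfolding R_def by auto
      then have "b' \<le> x" unfolding b'_def using Min_le[OF fR] by blast
      then show False using x by simp
    qed
  next
    fix x assume "x \<in> {x\<in>B. x \<le> b}"
    then show "x \<in> {x\<in>B. x < b'}" using b'R unfolding R_def by auto
  qed
  then have "card {x\<in>B. x < b'} = Suc n" using cL by simp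
  moreover have "b' \<in> B" using b'R unfolding R_def by simp
  ultimately show ?case by blast
qed

lemma rank_uniq:
  fixes B :: "nat set"
  assumes "finite B" "b1 \<in> B" "b2 \<in> B" "card {x\<in>B. x < b1} = card {x\<in>B. x < b2}"
  shows "b1 = b2"
proof (rule ccontr)
  assume ne: "b1 \<noteq> b2"
  have lt: "\<And>u v. u \<in> B \<Longrightarrow> v \<in> B \<Longrightarrow> u < v \<Longrightarrow> card {x\<in>B. x < u} < card {x\<in>B. x < v}"
  proof -
    fix u v assume "u \<in> B" "v \<in> B" "u < v"
    have "{x\<in>B. x < u} \<subset> {x\<in>B. x < v}" using \<open>u \<in> B\<close> \<open>u < v\<close> by auto
    then show "card {x\<in>B. x < u} < card {x\<in>B. x < v}"
      by (rule psubset_card_mono[rotated]) (use assms(1) in simp)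
  qed
  show False
  proof (cases "b1 < b2")
    case True then show False using lt[OF assms(2,3)] assms(4) by simp
  next
    case False then have "b2 < b1" using ne by simp
    then show False using lt[OF assms(3,2)] assms(4) by simp
  qed
qed

definition glue :: "nat set set \<Rightarrow> nat set set \<Rightarrow> nat \<Rightarrow> nat \<Rightarrow> nat set set" where
  "glue P1 P2 lo b = (P1 - {blk P1 lo}) \<union> (P2 - {blk P2 b}) \<union> {blk P1 lo \<union> blk P2 b}"

definition Sb :: "nat \<Rightarrow> nat \<Rightarrow> nat \<Rightarrow> nat \<Rightarrow> nat \<Rightarrow> nat \<Rightarrow> nat set set set" where
  "Sb k lo hi p q b = {P\<in>EXs k lo hi (p+q). b \<in> blk P lo \<and> card {x\<in>blk P lo. x < b} = p}"

lemma glue_facts: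
  assumes P1: "P1 \<in> EXs k lo b p" and P2: "P2 \<in> EXs k b hi q"
  shows "glue P1 P2 lo b \<in> Sb k lo hi p q b" "blk (glue P1 P2 lo b) lo = blk P1 lo \<union> blk P2 b"
proof -
  define B1 where "B1 = blk P1 lo"
  define B2 where "B2 = blk P2 b"
  define G where "G = glue P1 P2 lo b"
  have G: "G = (P1 - {B1}) \<union> (P2 - {B2}) \<union> {B1 \<union> B2}" unfolding G_def glue_def B1_def B2_def by simp
  note p1 = EXsE(1)[OF P1] and p2 = EXsE(1)[OF P2]
  have B1: "B1 \<in> P1" "lo \<in> B1" "card B1 = p" using EXsE(3,4,5)[OF P1] unfolding B1_def by auto
  have B2: "B2 \<in> P2" "b \<in> B2" "card B2 = q" using EXsE(3,4,5)[OF P2] unfolding B2_def by auto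
  have lob: "lo < b" and bhi: "b < hi" using EXs_lo[OF P1] EXs_lo[OF P2] by auto
  have s1: "\<And>V. V \<in> P1 \<Longrightarrow> V \<subseteq> {lo..<b}" using p1 by (rule part_sub)
  have s2: "\<And>V. V \<in> P2 \<Longrightarrow> V \<subseteq> {b..<hi}" using p2 by (rule part_sub)
  have ne1: "\<And>V. V \<in> P1 \<Longrightarrow> V \<noteq> {}" using p1 by (rule part_ne)
  have ne2: "\<And>V. V \<in> P2 \<Longrightarrow> V \<noteq> {}" using p2 by (rule part_ne)
  have d12: "\<And>U V. U \<in> P1 \<Longrightarrow> V \<in> P2 \<Longrightarrow> U \<inter> V = {}"
  proof -
    fix U V assume "U \<in> P1" "V \<in> P2"
    then have "U \<subseteq> {lo..<b}" "V \<subseteq> {b..<hi}" using s1 s2 by auto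
    then show "U \<inter> V = {}" by fastforce
  qed
  have part: "is_partition G {lo..<hi}"
    unfolding is_partition_def
  proof (intro conjI ballI impI)
    fix V assume "V \<in> G"
    then show "V \<noteq> {}" unfolding G using ne1 ne2 B1 by blast
  next
    fix U W assume U: "U \<in> G" and W: "W \<in> G" and UW: "U \<noteq> W"
    consider (a) "U \<in> P1 - {B1}" | (b) "U \<in> P2 - {B2}" | (c) "U = B1 \<union> B2" using U unfolding G by blast
    then show "U \<inter> W = {}"
    proof cases
      case a
      consider (a2) "W \<in> P1 - {B1}" | (b2) "W \<in> P2 - {B2}" | (c2) "W = B1 \<union> B2" using W unfolding G by blast
      then show ?thesis
      proof cases
        case a2 then show ?thesis using part_disj[OF p1, of U W] a UW by blast
      next
        case b2 then show ?thesis using d12 a by blast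
      next
        case c2
        have "U \<inter> B1 = {}" using part_disj[OF p1, of U B1] a B1 by blast
        moreover have "U \<inter> B2 = {}" using d12 a B2 by blast
        ultimately show ?thesis using c2 by blast
      qed
    next
      case b
      consider (a2) "W \<in> P1 - {B1}" | (b2) "W \<in> P2 - {B2}" | (c2) "W = B1 \<union> B2" using W unfolding G by blast
      then show ?thesis
      proof cases
        case a2 then show ?thesis using d12 b by blast
      next
        case b2 then show ?thesis using part_disj[OF p2, of U W] b UW by blast
      next
        case c2
        have "U \<inter> B2 = {}" using part_disj[OF p2, of U B2] b B2 by blast
        moreover have "U \<inter> B1 = {}" using d12 b B1 by blast
        ultimately show ?thesis using c2 by blast
      qed
    next
      case c
      consider (a2) "W \<in> P1 - {B1}" | (b2) "W \<in> P2 - {B2}" | (c2) "W = B1 \<union> B2" using W unfolding G by blast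
      then show ?thesis
      proof cases
        case a2
        have "W \<inter> B1 = {}" using part_disj[OF p1, of W B1] a2 B1 by blast
        moreover have "W \<inter> B2 = {}" using d12 a2 B2 by blast
        ultimately show ?thesis using c by blast
      next
        case b2
        have "W \<inter> B2 = {}" using part_disj[OF p2, of W B2] b2 B2 by blast
        moreover have "W \<inter> B1 = {}" using d12 b2 B1 by blast
        ultimately show ?thesis using c by blast
      next
        case c2 then show ?thesis using c UW by simp
      qed
    qed
  next
    have u1: "\<Union>P1 = {lo..<b}" using p1 by (rule part_union)
    have u2: "\<Union>P2 = {b..<hi}" using p2 by (rule part_union)
    have "\<Union>G = \<Union>P1 \<union> \<Union>P2" unfolding G using B1(1) B2(1) by blast
    also have "\<dots> = {lo..<hi}" unfolding u1 u2 using lob bhi by auto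
    finally show "\<Union>G = {lo..<hi}" .
  qed
  have nc: "non_crossing G" unfolding G
    by (rule nc_glue[OF EXsE(2)[OF P1] EXsE(2)[OF P2] p1 p2 _ B1(1,2) _ B2(1,2)]) auto
  have mG: "B1 \<union> B2 \<in> G" unfolding G by blast
  have cB: "card (B1 \<union> B2) = p + q"
  proof -
    have "finite B1" "finite B2" using s1[OF B1(1)] s2[OF B2(1)] finite_subset by auto
    moreover have "B1 \<inter> B2 = {}" using d12 B1(1) B2(1) by blast
    ultimately show ?thesis using B1(3) B2(3) card_Un_disjoint by metis
  qed
  have dv: "\<And>C. C \<in> G \<Longrightarrow> C \<noteq> B1 \<union> B2 \<Longrightarrow> k dvd card C"
  proof -
    fix C assume "C \<in> G" "C \<noteq> B1 \<union> B2"
    then have "C \<in> P1 - {B1} \<or> C \<in> P2 - {B2}" unfolding G by blast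
    then show "k dvd card C" using EXsE(6)[OF P1] EXsE(6)[OF P2] unfolding B1_def B2_def by blast
  qed
  have inG: "G \<in> EXs k lo hi (p+q)"
    by (rule EXsI[OF part nc mG _ cB dv]) (use B1 in blast)
  have bG: "blk G lo = B1 \<union> B2" using blk_eq[OF part mG] B1(2) by blast
  have "{x\<in>B1 \<union> B2. x < b} = B1" using s1[OF B1(1)] s2[OF B2(1)] by auto
  then have "card {x\<in>blk G lo. x < b} = p" using bG B1(3) by simp
  then show "glue P1 P2 lo b \<in> Sb k lo hi p q b" unfolding Sb_def G_def[symmetric] using inG bG B2(2) by blast
  show "blk (glue P1 P2 lo b) lo = blk P1 lo \<union> blk P2 b" using bG unfolding G_def B1_def B2_def .
qed

lemma Sb_facts:
  assumes P: "P \<in> Sb k lo hi p q b" and p0: "p > 0"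
  shows "is_partition P {lo..<hi}" "non_crossing P" "blk P lo \<in> P" "lo \<in> blk P lo" "b \<in> blk P lo"
    "card (blk P lo) = p + q" "card {x\<in>blk P lo. x < b} = p" "lo < b" "b < hi"
    "\<And>V. V \<in> P \<Longrightarrow> V \<noteq> blk P lo \<Longrightarrow> V \<subseteq> {..<b} \<or> V \<subseteq> {b<..}"
    "\<And>C. C \<in> P \<Longrightarrow> C \<noteq> blk P lo \<Longrightarrow> k dvd card C"
proof -
  have E: "P \<in> EXs k lo hi (p+q)" and b: "b \<in> blk P lo" and c: "card {x\<in>blk P lo. x < b} = p"
    using P unfolding Sb_def by auto
  note p = EXsE(1)[OF E]
  show "is_partition P {lo..<hi}" "non_crossing P" "blk P lo \<in> P" "lo \<in> blk P lo" "b \<in> blk P lo"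
    "card (blk P lo) = p + q" "card {x\<in>blk P lo. x < b} = p"
    using EXsE[OF E] b c by auto
  have sub: "blk P lo \<subseteq> {lo..<hi}" using part_sub[OF p EXsE(3)[OF E]] .
  then show "b < hi" using b by auto
  have "lo \<le> b" using sub b by auto
  moreover have "b \<noteq> lo"
  proof
    assume "b = lo"
    then have "{x\<in>blk P lo. x < b} = {}" using sub by auto
    then have "card {x\<in>blk P lo. x < b} = 0" by (simp only: card.empty)
    then show False using c p0 by simp
  qed
  ultimately show "lo < b" by simp
  show "\<And>V. V \<in> P \<Longrightarrow> V \<noteq> blk P lo \<Longrightarrow> V \<subseteq> {..<b} \<or> V \<subseteq> {b<..}"
    by (rule nc_sep[OF p EXsE(2)[OF E] EXsE(3)[OF E] EXsE(4)[OF E] _ b]) auto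
  show "\<And>C. C \<in> P \<Longrightarrow> C \<noteq> blk P lo \<Longrightarrow> k dvd card C" using EXsE(6)[OF E] .
qed

lemma cut_facts:
  assumes P: "P \<in> Sb k lo hi p q b" and p0: "p > 0"
  shows "restr P {..<b} \<in> EXs k lo b p" "restr P {b..} \<in> EXs k b hi q"
    "blk (restr P {..<b}) lo = blk P lo \<inter> {..<b}" "blk (restr P {b..}) b = blk P lo \<inter> {b..}"
proof -
  note F = Sb_facts[OF P p0]
  define B where "B = blk P lo"
  have B: "B \<in> P" "lo \<in> B" "b \<in> B" "card B = p + q" "card {x\<in>B. x < b} = p"
    using F(3-7) unfolding B_def by auto
  have sep: "\<And>V. V \<in> P \<Longrightarrow> V \<noteq> B \<Longrightarrow> V \<subseteq> {..<b} \<or> V \<subseteq> {b<..}" using F(10) unfolding B_def by blast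
  have dv: "\<And>C. C \<in> P \<Longrightarrow> C \<noteq> B \<Longrightarrow> k dvd card C" using F(11) unfolding B_def by blast
  have fB: "finite B" using part_sub[OF F(1) B(1)] finite_subset by blast
  have i1: "{lo..<hi} \<inter> {..<b} = {lo..<b}" using F(9) by auto
  have i2: "{lo..<hi} \<inter> {b..} = {b..<hi}" using F(8) by auto
  have pr1: "is_partition (restr P {..<b}) {lo..<b}" using part_restr[OF F(1), of "{..<b}"] unfolding i1 .
  have pr2: "is_partition (restr P {b..}) {b..<hi}" using part_restr[OF F(1), of "{b..}"] unfolding i2 .
  have m1: "B \<inter> {..<b} \<in> restr P {..<b}" unfolding restr_def using B(1,2) F(8) by auto
  have m2: "B \<inter> {b..} \<in> restr P {b..}" unfolding restr_def using B(1,3) by auto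
  have c1: "card (B \<inter> {..<b}) = p" using B(5) by (simp add: Int_def lessThan_def conj_commute)
  have "card B = card (B \<inter> {..<b}) + card (B \<inter> {b..})"
  proof -
    have "B = (B \<inter> {..<b}) \<union> (B \<inter> {b..})" by auto
    moreover have "(B \<inter> {..<b}) \<inter> (B \<inter> {b..}) = {}" by auto
    ultimately show ?thesis using fB card_Un_disjoint[of "B \<inter> {..<b}" "B \<inter> {b..}"] by simp
  qed
  then have c2: "card (B \<inter> {b..}) = q" using c1 B(4) by simp
  show "restr P {..<b} \<in> EXs k lo b p"
  proof (rule EXsI[OF pr1 nc_restr[OF F(2)] m1 _ c1])
    show "lo \<in> B \<inter> {..<b}" using B(2) F(8) by simp
    fix C assume C: "C \<in> restr P {..<b}" "C \<noteq> B \<inter> {..<b}"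
    then obtain V where V: "V \<in> P" "C = V \<inter> {..<b}" "C \<noteq> {}" unfolding restr_def by blast
    have "V \<noteq> B" using V C(2) by blast
    then have "V \<subseteq> {..<b} \<or> V \<subseteq> {b<..}" using sep V(1) by blast
    moreover have "\<not> V \<subseteq> {b<..}" using V(2,3) by auto
    ultimately have "C = V" using V(2) by auto
    then show "k dvd card C" using dv V(1) \<open>V \<noteq> B\<close> by simp
  qed
  show "restr P {b..} \<in> EXs k b hi q"
  proof (rule EXsI[OF pr2 nc_restr[OF F(2)] m2 _ c2])
    show "b \<in> B \<inter> {b..}" using B(3) by simp
    fix C assume C: "C \<in> restr P {b..}" "C \<noteq> B \<inter> {b..}"
    then obtain V where V: "V \<in> P" "C = V \<inter> {b..}" "C \<noteq> {}" unfolding restr_def by blast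
    have "V \<noteq> B" using V C(2) by blast
    then have "V \<subseteq> {..<b} \<or> V \<subseteq> {b<..}" using sep V(1) by blast
    moreover have "\<not> V \<subseteq> {..<b}" using V(2,3) by auto
    ultimately have "C = V" using V(2) by auto
    then show "k dvd card C" using dv V(1) \<open>V \<noteq> B\<close> by simp
  qed
  show "blk (restr P {..<b}) lo = blk P lo \<inter> {..<b}"
    using blk_eq[OF pr1 m1] B(2) F(8) unfolding B_def by simp
  show "blk (restr P {b..}) b = blk P lo \<inter> {b..}"
    using blk_eq[OF pr2 m2] B(3) unfolding B_def by simp
qed

lemma glue_cut:
  assumes P: "P \<in> Sb k lo hi p q b" and p0: "p > 0"
  shows "glue (restr P {..<b}) (restr P {b..}) lo b = P"
proof -
  note F = Sb_facts[OF P p0]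
  note C = cut_facts[OF P p0]
  define B where "B = blk P lo"
  have B: "B \<in> P" "lo \<in> B" "b \<in> B"
    using F(3-5) unfolding B_def by auto
  have sep: "\<And>V. V \<in> P \<Longrightarrow> V \<noteq> B \<Longrightarrow> V \<subseteq> {..<b} \<or> V \<subseteq> {b<..}" using F(10) unfolding B_def by blast
  have ne: "\<And>V. V \<in> P \<Longrightarrow> V \<noteq> {}" using F(1) by (rule part_ne)
  have dj: "\<And>V. V \<in> P \<Longrightarrow> V \<noteq> B \<Longrightarrow> V \<inter> B = {}" using part_disj[OF F(1)] B(1) by blast
  have g: "glue (restr P {..<b}) (restr P {b..}) lo b =
      (restr P {..<b} - {B \<inter> {..<b}}) \<union> (restr P {b..} - {B \<inter> {b..}}) \<union> {(B \<inter> {..<b}) \<union> (B \<inter> {b..})}"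
    unfolding glue_def C(3,4) B_def by simp
  have u: "(B \<inter> {..<b}) \<union> (B \<inter> {b..}) = B" by auto
  show ?thesis unfolding g u
  proof (intro set_eqI iffI)
    fix V assume "V \<in> (restr P {..<b} - {B \<inter> {..<b}}) \<union> (restr P {b..} - {B \<inter> {b..}}) \<union> {B}"
    then consider (a) "V \<in> restr P {..<b}" "V \<noteq> B \<inter> {..<b}" | (b) "V \<in> restr P {b..}" "V \<noteq> B \<inter> {b..}" | (c) "V = B"
      by blast
    then show "V \<in> P"
    proof cases
      case a
      then obtain W where W: "W \<in> P" "V = W \<inter> {..<b}" "V \<noteq> {}" unfolding restr_def by blast
      have "W \<noteq> B" using W a(2) by blast
      then have "W \<subseteq> {..<b} \<or> W \<subseteq> {b<..}" using sep W(1) by blast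
      moreover have "\<not> W \<subseteq> {b<..}" using W(2,3) by auto
      ultimately have "V = W" using W(2) by auto
      then show ?thesis using W(1) by simp
    next
      case b
      then obtain W where W: "W \<in> P" "V = W \<inter> {b..}" "V \<noteq> {}" unfolding restr_def by blast
      have "W \<noteq> B" using W b(2) by blast
      then have "W \<subseteq> {..<b} \<or> W \<subseteq> {b<..}" using sep W(1) by blast
      moreover have "\<not> W \<subseteq> {..<b}" using W(2,3) by auto
      ultimately have "V = W" using W(2) by auto
      then show ?thesis using W(1) by simp
    next
      case c then show ?thesis using B(1) by simp
    qed
  next
    fix V assume V: "V \<in> P"
    show "V \<in> (restr P {..<b} - {B \<inter> {..<b}}) \<union> (restr P {b..} - {B \<inter> {b..}}) \<union> {B}"
    proof (cases "V = B")
      case True then show ?thesis by simp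
    next
      case False
      have d: "V \<inter> B = {}" using dj V False by blast
      consider (a) "V \<subseteq> {..<b}" | (b) "V \<subseteq> {b<..}" using sep V False by blast
      then show ?thesis
      proof cases
        case a
        have "V = V \<inter> {..<b}" using a by auto
        then have "V \<in> restr P {..<b}" unfolding restr_def using V ne by blast
        moreover have "V \<noteq> B \<inter> {..<b}" using d B(2) F(8) by blast
        ultimately show ?thesis by blast
      next
        case b
        have "V = V \<inter> {b..}" using b by auto
        then have "V \<in> restr P {b..}" unfolding restr_def using V ne by blast
        moreover have "V \<noteq> B \<inter> {b..}" using d B(3) by blast
        ultimately show ?thesis by blast
      qed
    qed
  qed
qed

definition cnt :: "nat \<Rightarrow> nat set set \<Rightarrow> nat" where
  "cnt c P = card {V\<in>P. card V = c}"

definition cntnm :: "nat \<Rightarrow> nat \<Rightarrow> nat set set \<Rightarrow> nat" where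
  "cntnm c lo P = card {V\<in>P. lo \<notin> V \<and> card V = c}"

lemma cut_glue:
  assumes P1: "P1 \<in> EXs k lo b p" and P2: "P2 \<in> EXs k b hi q"
  shows "restr (glue P1 P2 lo b) {..<b} = P1" "restr (glue P1 P2 lo b) {b..} = P2"
    "cntnm c lo (glue P1 P2 lo b) = cntnm c lo P1 + cntnm c b P2"
proof -
  define B1 where "B1 = blk P1 lo"
  define B2 where "B2 = blk P2 b"
  have G: "glue P1 P2 lo b = (P1 - {B1}) \<union> (P2 - {B2}) \<union> {B1 \<union> B2}" unfolding glue_def B1_def B2_def by simp
  note p1 = EXsE(1)[OF P1] and p2 = EXsE(1)[OF P2]
  have B1: "B1 \<in> P1" "lo \<in> B1" using EXsE(3,4)[OF P1] unfolding B1_def by auto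
  have B2: "B2 \<in> P2" "b \<in> B2" using EXsE(3,4)[OF P2] unfolding B2_def by auto
  have lob: "lo < b" and bhi: "b < hi" using EXs_lo[OF P1] EXs_lo[OF P2] by auto
  have s1: "\<And>V. V \<in> P1 \<Longrightarrow> V \<subseteq> {lo..<b}" using p1 by (rule part_sub)
  have s2: "\<And>V. V \<in> P2 \<Longrightarrow> V \<subseteq> {b..<hi}" using p2 by (rule part_sub)
  have ne1: "\<And>V. V \<in> P1 \<Longrightarrow> V \<noteq> {}" using p1 by (rule part_ne)
  have ne2: "\<And>V. V \<in> P2 \<Longrightarrow> V \<noteq> {}" using p2 by (rule part_ne)
  have u1: "\<And>V. V \<in> P1 \<Longrightarrow> lo \<in> V \<Longrightarrow> V = B1" using part_uniq[OF p1] B1 by blast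
  have u2: "\<And>V. V \<in> P2 \<Longrightarrow> b \<in> V \<Longrightarrow> V = B2" using part_uniq[OF p2] B2 by blast
  have l1: "\<And>V. V \<in> P1 \<Longrightarrow> V \<inter> {..<b} = V" using s1 by fastforce
  have l2: "\<And>V. V \<in> P2 \<Longrightarrow> V \<inter> {..<b} = {}" using s2 by fastforce
  have r1: "\<And>V. V \<in> P1 \<Longrightarrow> V \<inter> {b..} = {}" using s1 by fastforce
  have r2: "\<And>V. V \<in> P2 \<Longrightarrow> V \<inter> {b..} = V" using s2 by fastforce
  have m1: "(B1 \<union> B2) \<inter> {..<b} = B1" using l1[OF B1(1)] l2[OF B2(1)] by auto
  have m2: "(B1 \<union> B2) \<inter> {b..} = B2" using r1[OF B1(1)] r2[OF B2(1)] by auto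
  show "restr (glue P1 P2 lo b) {..<b} = P1"
    unfolding restr_def G
  proof (intro set_eqI iffI)
    fix C assume "C \<in> (\<lambda>V. V \<inter> {..<b}) ` (P1 - {B1} \<union> (P2 - {B2}) \<union> {B1 \<union> B2}) - {{}}"
    then obtain V where V: "V \<in> P1 - {B1} \<union> (P2 - {B2}) \<union> {B1 \<union> B2}" "C = V \<inter> {..<b}" "C \<noteq> {}" by blast
    then consider "V \<in> P1" | "V \<in> P2" | "V = B1 \<union> B2" by blast
    then show "C \<in> P1"
    proof cases
      case 1 then show ?thesis using V(2) l1 by simp
    next
      case 2 then show ?thesis using V(2,3) l2 by simp
    next
      case 3 then show ?thesis using V(2) m1 B1(1) by simp
    qed
  next
    fix C assume C: "C \<in> P1"
    show "C \<in> (\<lambda>V. V \<inter> {..<b}) ` (P1 - {B1} \<union> (P2 - {B2}) \<union> {B1 \<union> B2}) - {{}}"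
    proof (cases "C = B1")
      case True
      then have "C = (B1 \<union> B2) \<inter> {..<b}" using m1 by simp
      then show ?thesis using ne1[OF C] by blast
    next
      case False
      then have "C \<in> P1 - {B1}" using C by simp
      then show ?thesis using l1[OF C] ne1[OF C] by (metis (no_types, lifting) Diff_iff UnI1 image_eqI singletonD)
    qed
  qed
  show "restr (glue P1 P2 lo b) {b..} = P2"
    unfolding restr_def G
  proof (intro set_eqI iffI)
    fix C assume "C \<in> (\<lambda>V. V \<inter> {b..}) ` (P1 - {B1} \<union> (P2 - {B2}) \<union> {B1 \<union> B2}) - {{}}"
    then obtain V where V: "V \<in> P1 - {B1} \<union> (P2 - {B2}) \<union> {B1 \<union> B2}" "C = V \<inter> {b..}" "C \<noteq> {}" by blast
    then consider "V \<in> P1" | "V \<in> P2" | "V = B1 \<union> B2" by blast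
    then show "C \<in> P2"
    proof cases
      case 1 then show ?thesis using V(2,3) r1 by simp
    next
      case 2 then show ?thesis using V(2) r2 by simp
    next
      case 3 then show ?thesis using V(2) m2 B2(1) by simp
    qed
  next
    fix C assume C: "C \<in> P2"
    show "C \<in> (\<lambda>V. V \<inter> {b..}) ` (P1 - {B1} \<union> (P2 - {B2}) \<union> {B1 \<union> B2}) - {{}}"
    proof (cases "C = B2")
      case True
      then have "C = (B1 \<union> B2) \<inter> {b..}" using m2 by simp
      then show ?thesis using ne2[OF C] by blast
    next
      case False
      then have "C \<in> P2 - {B2}" using C by simp
      then show ?thesis using r2[OF C] ne2[OF C] by (metis (no_types, lifting) Diff_iff UnI1 UnI2 image_eqI singletonD)
    qed
  qed
  have eq: "{V\<in>glue P1 P2 lo b. lo \<notin> V \<and> card V = c} = {V\<in>P1. lo \<notin> V \<and> card V = c} \<union> {V\<in>P2. b \<notin> V \<and> card V = c}"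
    unfolding G
  proof (intro set_eqI iffI)
    fix V assume V: "V \<in> {V \<in> P1 - {B1} \<union> (P2 - {B2}) \<union> {B1 \<union> B2}. lo \<notin> V \<and> card V = c}"
    then have "V \<in> P1 \<or> (V \<in> P2 \<and> V \<noteq> B2)" using B1(2) by blast
    moreover have "V \<in> P2 \<Longrightarrow> V \<noteq> B2 \<Longrightarrow> b \<notin> V" using u2 by blast
    ultimately show "V \<in> {V\<in>P1. lo \<notin> V \<and> card V = c} \<union> {V\<in>P2. b \<notin> V \<and> card V = c}" using V by blast
  next
    fix V assume V: "V \<in> {V\<in>P1. lo \<notin> V \<and> card V = c} \<union> {V\<in>P2. b \<notin> V \<and> card V = c}"
    then consider "V \<in> P1" "lo \<notin> V" "card V = c" | "V \<in> P2" "b \<notin> V" "card V = c" by blast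
    then show "V \<in> {V \<in> P1 - {B1} \<union> (P2 - {B2}) \<union> {B1 \<union> B2}. lo \<notin> V \<and> card V = c}"
    proof cases
      case 1
      then have "V \<noteq> B1" using B1(2) by blast
      then show ?thesis using 1 by blast
    next
      case 2
      then have "V \<noteq> B2" using B2(2) by blast
      moreover have "lo \<notin> V" using s2[OF 2(1)] lob by auto
      ultimately show ?thesis using 2 by blast
    qed
  qed
  have fin1: "finite P1" using part_finite[OF p1] by simp
  have fin2: "finite P2" using part_finite[OF p2] by simp
  have dj: "{V\<in>P1. lo \<notin> V \<and> card V = c} \<inter> {V\<in>P2. b \<notin> V \<and> card V = c} = {}"
  proof (rule ccontr)
    assume "{V\<in>P1. lo \<notin> V \<and> card V = c} \<inter> {V\<in>P2. b \<notin> V \<and> card V = c} \<noteq> {}"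
    then obtain V where "V \<in> P1" "V \<in> P2" by blast
    then show False using l1 l2 ne1 by metis
  qed
  show "cntnm c lo (glue P1 P2 lo b) = cntnm c lo P1 + cntnm c b P2"
    unfolding cntnm_def eq using card_Un_disjoint[OF _ _ dj] fin1 fin2 by simp
qed

lemma Sb_bij:
  assumes p0: "p > 0"
  shows "bij_betw (\<lambda>(P1,P2). glue P1 P2 lo b) (EXs k lo b p \<times> EXs k b hi q) (Sb k lo hi p q b)"
proof (rule bij_betw_byWitness[where f' = "\<lambda>P. (restr P {..<b}, restr P {b..})"])
  show "\<forall>a\<in>EXs k lo b p \<times> EXs k b hi q. (\<lambda>P. (restr P {..<b}, restr P {b..})) ((\<lambda>(P1,P2). glue P1 P2 lo b) a) = a"
    using cut_glue(1,2) by auto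
  show "\<forall>a'\<in>Sb k lo hi p q b. (\<lambda>(P1,P2). glue P1 P2 lo b) ((\<lambda>P. (restr P {..<b}, restr P {b..})) a') = a'"
    using glue_cut[OF _ p0] by auto
  show "(\<lambda>(P1,P2). glue P1 P2 lo b) ` (EXs k lo b p \<times> EXs k b hi q) \<subseteq> Sb k lo hi p q b"
    using glue_facts(1) by auto
  show "(\<lambda>P. (restr P {..<b}, restr P {b..})) ` Sb k lo hi p q b \<subseteq> EXs k lo b p \<times> EXs k b hi q"
    using cut_facts(1,2)[OF _ p0] by auto
qed

lemma EXs_finite: "finite (EXs k lo hi r)"
proof -
  have "EXs k lo hi r \<subseteq> Pow (Pow {lo..<hi})"
    unfolding EXs_def is_partition_def by auto
  then show ?thesis by (rule finite_subset) simp
qed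

lemma NCS_finite: "finite S \<Longrightarrow> finite (NCS k S)"
proof -
  assume "finite S"
  have "NCS k S \<subseteq> Pow (Pow S)"
    unfolding NCS_def is_partition_def by auto
  then show ?thesis by (rule finite_subset) (simp add: \<open>finite S\<close>)
qed

lemma EXs_UN:
  assumes p0: "p > 0" and q0: "q > 0"
  shows "EXs k lo hi (p+q) = (\<Union>b\<in>{lo<..<hi}. Sb k lo hi p q b)"
proof (intro set_eqI iffI)
  fix P assume P: "P \<in> EXs k lo hi (p+q)"
  define B where "B = blk P lo"
  have sub: "B \<subseteq> {lo..<hi}" using part_sub[OF EXsE(1)[OF P] EXsE(3)[OF P]] unfolding B_def .
  have fB: "finite B" using sub finite_subset by blast
  have cB: "card B = p + q" using EXsE(5)[OF P] unfolding B_def .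
  have "p < card B" using cB q0 by simp
  then obtain b where b: "b \<in> B" "card {x\<in>B. x < b} = p" using exists_rank[OF fB] by blast
  have "b \<noteq> lo"
  proof
    assume "b = lo"
    then have "{x\<in>B. x < b} = {}" using sub by auto
    then have "card {x\<in>B. x < b} = 0" by (simp only: card.empty)
    then show False using b p0 by simp
  qed
  then have "b \<in> {lo<..<hi}" using b sub by auto
  moreover have "P \<in> Sb k lo hi p q b" unfolding Sb_def using P b B_def by blast
  ultimately show "P \<in> (\<Union>b\<in>{lo<..<hi}. Sb k lo hi p q b)" by blast
next
  fix P assume "P \<in> (\<Union>b\<in>{lo<..<hi}. Sb k lo hi p q b)"
  then show "P \<in> EXs k lo hi (p+q)" unfolding Sb_def by blast
qed

lemma Sb_disj:
  assumes "b1 \<noteq> b2"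
  shows "Sb k lo hi p q b1 \<inter> Sb k lo hi p q b2 = {}"
proof (rule ccontr)
  assume "Sb k lo hi p q b1 \<inter> Sb k lo hi p q b2 \<noteq> {}"
  then obtain P where P1: "P \<in> Sb k lo hi p q b1" and P2: "P \<in> Sb k lo hi p q b2" by blast
  have E: "P \<in> EXs k lo hi (p+q)" using P1 unfolding Sb_def by blast
  have fB: "finite (blk P lo)" using part_sub[OF EXsE(1)[OF E] EXsE(3)[OF E]] finite_subset by blast
  have "b1 = b2" using rank_uniq[OF fB] P1 P2 unfolding Sb_def by auto
  then show False using assms by simp
qed

lemma Sb_finite: "finite (Sb k lo hi p q b)"
  unfolding Sb_def using EXs_finite by simp

lemma sum_prod_split:
  fixes f g :: "'a \<Rightarrow> nat"
  assumes "finite A" "finite B"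
  shows "(\<Sum>(x,y)\<in>A\<times>B. f x + g y) = (\<Sum>x\<in>A. f x) * card B + card A * (\<Sum>y\<in>B. g y)"
proof -
  have "(\<Sum>(x,y)\<in>A\<times>B. f x + g y) = (\<Sum>x\<in>A. \<Sum>y\<in>B. f x + g y)"
    by (simp add: sum.cartesian_product)
  also have "\<dots> = (\<Sum>x\<in>A. card B * f x + (\<Sum>y\<in>B. g y))"
    by (simp add: sum.distrib)
  also have "\<dots> = (\<Sum>x\<in>A. f x) * card B + card A * (\<Sum>y\<in>B. g y)"
    by (simp add: sum.distrib sum_distrib_left mult.commute)
  finally show ?thesis .
qed

lemma split_count:
  assumes p0: "p > 0" and q0: "q > 0"
  shows "card (EXs k lo (lo+N) (p+q)) = (\<Sum>i\<in>{1..<N}. card (EXs k lo (lo+i) p) * card (EXs k (lo+i) (lo+N) q))"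
    "(\<Sum>P\<in>EXs k lo (lo+N) (p+q). cntnm c lo P) = (\<Sum>i\<in>{1..<N}.
        (\<Sum>P\<in>EXs k lo (lo+i) p. cntnm c lo P) * card (EXs k (lo+i) (lo+N) q)
      + card (EXs k lo (lo+i) p) * (\<Sum>P\<in>EXs k (lo+i) (lo+N) q. cntnm c (lo+i) P))"
proof -
  define hi where "hi = lo + N"
  have U: "EXs k lo hi (p+q) = (\<Union>b\<in>{lo<..<hi}. Sb k lo hi p q b)" by (rule EXs_UN[OF p0 q0])
  have D: "\<forall>i\<in>{lo<..<hi}. \<forall>j\<in>{lo<..<hi}. i \<noteq> j \<longrightarrow> Sb k lo hi p q i \<inter> Sb k lo hi p q j = {}"
    using Sb_disj by blast
  have F: "\<forall>i\<in>{lo<..<hi}. finite (Sb k lo hi p q i)" using Sb_finite by blast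
  have rx: "\<And>g::nat\<Rightarrow>nat. (\<Sum>b\<in>{lo<..<hi}. g b) = (\<Sum>i\<in>{1..<N}. g (lo+i))"
  proof -
    fix g :: "nat \<Rightarrow> nat"
    have e: "{lo<..<hi} = (\<lambda>i. lo + i) ` {1..<N}" unfolding hi_def
    proof (intro set_eqI iffI)
      fix x assume "x \<in> {lo<..<lo+N}"
      then have "x = lo + (x - lo)" "x - lo \<in> {1..<N}" by auto
      then show "x \<in> (\<lambda>i. lo + i) ` {1..<N}" by blast
    qed auto
    have inj: "inj_on (\<lambda>i. lo + i) {1..<N}" by (simp add: inj_on_def)
    show "(\<Sum>b\<in>{lo<..<hi}. g b) = (\<Sum>i\<in>{1..<N}. g (lo+i))"
      by (simp only: e sum.reindex[OF inj] comp_def)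
  qed
  have cS: "\<And>b. card (Sb k lo hi p q b) = card (EXs k lo b p) * card (EXs k b hi q)"
    using bij_betw_same_card[OF Sb_bij[OF p0]] by (simp add: card_cartesian_product)
  have "card (EXs k lo hi (p+q)) = (\<Sum>b\<in>{lo<..<hi}. card (Sb k lo hi p q b))"
    unfolding U by (rule card_UN_disjoint[OF _ F D]) simp
  also have "\<dots> = (\<Sum>b\<in>{lo<..<hi}. card (EXs k lo b p) * card (EXs k b hi q))" using cS by simp
  finally show "card (EXs k lo (lo+N) (p+q)) = (\<Sum>i\<in>{1..<N}. card (EXs k lo (lo+i) p) * card (EXs k (lo+i) (lo+N) q))"
    using rx unfolding hi_def by simp
  have sS: "\<And>b. (\<Sum>P\<in>Sb k lo hi p q b. cntnm c lo P) =
      (\<Sum>P\<in>EXs k lo b p. cntnm c lo P) * card (EXs k b hi q) + card (EXs k lo b p) * (\<Sum>P\<in>EXs k b hi q. cntnm c b P)"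
  proof -
    fix b
    have "(\<Sum>P\<in>Sb k lo hi p q b. cntnm c lo P) = (\<Sum>x\<in>EXs k lo b p \<times> EXs k b hi q. cntnm c lo ((\<lambda>(P1,P2). glue P1 P2 lo b) x))"
      by (rule sum.reindex_bij_betw[OF Sb_bij[OF p0], symmetric])
    also have "\<dots> = (\<Sum>(P1,P2)\<in>EXs k lo b p \<times> EXs k b hi q. cntnm c lo P1 + cntnm c b P2)"
      by (rule sum.cong) (auto simp: cut_glue(3))
    also have "\<dots> = (\<Sum>P\<in>EXs k lo b p. cntnm c lo P) * card (EXs k b hi q) + card (EXs k lo b p) * (\<Sum>P\<in>EXs k b hi q. cntnm c b P)"
      by (rule sum_prod_split) (simp_all add: EXs_finite)
    finally show "?thesis b" .
  qed
  have "(\<Sum>P\<in>EXs k lo hi (p+q). cntnm c lo P) = (\<Sum>b\<in>{lo<..<hi}. \<Sum>P\<in>Sb k lo hi p q b. cntnm c lo P)"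
    unfolding U by (rule sum.UNION_disjoint[OF _ F D]) simp
  also have "\<dots> = (\<Sum>b\<in>{lo<..<hi}. (\<Sum>P\<in>EXs k lo b p. cntnm c lo P) * card (EXs k b hi q) + card (EXs k lo b p) * (\<Sum>P\<in>EXs k b hi q. cntnm c b P))"
    using sS by simp
  finally show "(\<Sum>P\<in>EXs k lo (lo+N) (p+q). cntnm c lo P) = (\<Sum>i\<in>{1..<N}.
        (\<Sum>P\<in>EXs k lo (lo+i) p. cntnm c lo P) * card (EXs k (lo+i) (lo+N) q)
      + card (EXs k lo (lo+i) p) * (\<Sum>P\<in>EXs k (lo+i) (lo+N) q. cntnm c (lo+i) P))"
    using rx unfolding hi_def by simp
qed

lemma EXs_big:
  assumes "N < r" shows "EXs k lo (lo+N) r = {}"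
proof (rule ccontr)
  assume "EXs k lo (lo+N) r \<noteq> {}"
  then obtain P where P: "P \<in> EXs k lo (lo+N) r" by blast
  have "blk P lo \<subseteq> {lo..<lo+N}" using part_sub[OF EXsE(1)[OF P] EXsE(3)[OF P]] .
  then have "card (blk P lo) \<le> N" using card_mono[of "{lo..<lo+N}"] by fastforce
  then show False using EXsE(5)[OF P] assms by simp
qed

lemma NCS_empty: "NCS k {} = {{}}"
proof (intro set_eqI iffI)
  fix P assume "P \<in> NCS k {}"
  then have "is_partition P {}" unfolding NCS_def by blast
  then show "P \<in> {{}}" unfolding is_partition_def by auto
next
  fix P assume "P \<in> {{}::nat set set}"
  then have P: "P = {}" by simp
  have "non_crossing P" unfolding P by (rule ncI) simp
  moreover have "is_partition P {}" unfolding P is_partition_def by simp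
  ultimately show "P \<in> NCS k {}" unfolding NCS_def P by simp
qed

lemma single_bij:
  assumes hi: "lo < hi"
  shows "bij_betw (\<lambda>Q. insert {lo} Q) (NCS k {Suc lo..<hi}) (EXs k lo hi 1)"
proof (rule bij_betw_byWitness[where f' = "\<lambda>P. P - {{lo}}"])
  show "\<forall>Q\<in>NCS k {Suc lo..<hi}. insert {lo} Q - {{lo}} = Q"
  proof
    fix Q assume Q: "Q \<in> NCS k {Suc lo..<hi}"
    have "{lo} \<notin> Q"
    proof
      assume "{lo} \<in> Q"
      then have "{lo} \<subseteq> {Suc lo..<hi}" using part_sub Q unfolding NCS_def by blast
      then show False by auto
    qed
    then show "insert {lo} Q - {{lo}} = Q" by simp
  qed
  show "\<forall>P\<in>EXs k lo hi 1. insert {lo} (P - {{lo}}) = P"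
  proof
    fix P assume P: "P \<in> EXs k lo hi 1"
    have "blk P lo = {lo}" using EXsE(4,5)[OF P] by (metis card_1_singletonE singletonD)
    then have "{lo} \<in> P" using EXsE(3)[OF P] by simp
    then show "insert {lo} (P - {{lo}}) = P" by blast
  qed
  show "(\<lambda>Q. insert {lo} Q) ` NCS k {Suc lo..<hi} \<subseteq> EXs k lo hi 1"
  proof
    fix P assume "P \<in> (\<lambda>Q. insert {lo} Q) ` NCS k {Suc lo..<hi}"
    then obtain Q where Q: "Q \<in> NCS k {Suc lo..<hi}" and P: "P = insert {lo} Q" by blast
    have pQ: "is_partition Q {Suc lo..<hi}" and ncQ: "non_crossing Q" and dQ: "\<forall>B\<in>Q. k dvd card B"
      using Q unfolding NCS_def by auto
    have nlo: "\<And>V. V \<in> Q \<Longrightarrow> lo \<notin> V" using part_sub[OF pQ] by fastforce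
    have pP: "is_partition P {lo..<hi}"
      unfolding is_partition_def
    proof (intro conjI ballI impI)
      fix V assume "V \<in> P" then show "V \<noteq> {}" using part_ne[OF pQ] P by blast
    next
      fix U W assume "U \<in> P" "W \<in> P" "U \<noteq> W"
      then show "U \<inter> W = {}" using part_disj[OF pQ] nlo P by fastforce
    next
      have "\<Union>P = {lo} \<union> {Suc lo..<hi}" using part_union[OF pQ] P by simp
      also have "\<dots> = {lo..<hi}" using hi by auto
      finally show "\<Union>P = {lo..<hi}" .
    qed
    have ncP: "non_crossing P"
    proof (rule ncI)
      fix U W x1 x2 x3 x4
      assume h: "U \<in> P" "W \<in> P" "U \<noteq> W" "x1 < x2" "x2 < x3" "x3 < x4" "x1 \<in> U" "x3 \<in> U" "x2 \<in> W" "x4 \<in> W"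
      show False
      proof (cases "U = {lo}")
        case True then show False using h by simp
      next
        case False
        show False
        proof (cases "W = {lo}")
          case True then show False using h by simp
        next
          case False2: False
          then have "U \<in> Q" "W \<in> Q" using h(1,2) False P by auto
          then show False using ncD[OF ncQ _ _ h(3-10)] by blast
        qed
      qed
    qed
    show "P \<in> EXs k lo hi 1"
      by (rule EXsI[OF pP ncP, of "{lo}"]) (use P dQ in auto)
  qed
  show "(\<lambda>P. P - {{lo}}) ` EXs k lo hi 1 \<subseteq> NCS k {Suc lo..<hi}"
  proof
    fix Q assume "Q \<in> (\<lambda>P. P - {{lo}}) ` EXs k lo hi 1"
    then obtain P where P: "P \<in> EXs k lo hi 1" and Q: "Q = P - {{lo}}" by blast
    have b: "blk P lo = {lo}" using EXsE(4,5)[OF P] by (metis card_1_singletonE singletonD)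
    note pP = EXsE(1)[OF P]
    have lo: "{lo} \<in> P" using EXsE(3)[OF P] b by simp
    have nlo: "\<And>V. V \<in> Q \<Longrightarrow> lo \<notin> V"
    proof
      fix V assume "V \<in> Q" "lo \<in> V"
      then have "V = {lo}" using part_uniq[OF pP _ lo] Q by blast
      then show False using \<open>V \<in> Q\<close> Q by simp
    qed
    have pQ: "is_partition Q {Suc lo..<hi}"
      unfolding is_partition_def
    proof (intro conjI ballI impI)
      fix V assume "V \<in> Q" then show "V \<noteq> {}" using part_ne[OF pP] Q by blast
    next
      fix U W assume "U \<in> Q" "W \<in> Q" "U \<noteq> W"
      then show "U \<inter> W = {}" using part_disj[OF pP] Q by blast
    next
      have "\<Union>Q \<subseteq> {lo..<hi} - {lo}" using part_sub[OF pP] Q nlo by blast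
      moreover have "{lo..<hi} - {lo} \<subseteq> \<Union>Q"
      proof
        fix x assume x: "x \<in> {lo..<hi} - {lo}"
        then obtain V where "V \<in> P" "x \<in> V" using part_cover[OF pP] by blast
        moreover have "V \<noteq> {lo}" using x \<open>x \<in> V\<close> by blast
        ultimately show "x \<in> \<Union>Q" using Q by blast
      qed
      moreover have "{lo..<hi} - {lo} = {Suc lo..<hi}" by auto
      ultimately show "\<Union>Q = {Suc lo..<hi}" by blast
    qed
    have ncQ: "non_crossing Q" using nc_subset[OF EXsE(2)[OF P]] Q by blast
    have "\<forall>B\<in>Q. k dvd card B" using EXsE(6)[OF P] b Q by blast
    then show "Q \<in> NCS k {Suc lo..<hi}" unfolding NCS_def using pQ ncQ by blast
  qed
qed

lemma single_count:
  assumes hi: "lo < hi"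
  shows "card (EXs k lo hi 1) = card (NCS k {Suc lo..<hi})"
    "(\<Sum>P\<in>EXs k lo hi 1. cntnm c lo P) = (\<Sum>P\<in>NCS k {Suc lo..<hi}. cnt c P)"
proof -
  show "card (EXs k lo hi 1) = card (NCS k {Suc lo..<hi})"
    using bij_betw_same_card[OF single_bij[OF hi]] by simp
  have "(\<Sum>P\<in>EXs k lo hi 1. cntnm c lo P) = (\<Sum>Q\<in>NCS k {Suc lo..<hi}. cntnm c lo (insert {lo} Q))"
    by (rule sum.reindex_bij_betw[OF single_bij[OF hi], symmetric])
  also have "\<dots> = (\<Sum>P\<in>NCS k {Suc lo..<hi}. cnt c P)"
  proof (rule sum.cong)
    fix Q assume Q: "Q \<in> NCS k {Suc lo..<hi}"
    have nlo: "\<And>V. V \<in> Q \<Longrightarrow> lo \<notin> V" using part_sub Q unfolding NCS_def by fastforce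
    have "{V \<in> insert {lo} Q. lo \<notin> V \<and> card V = c} = {V\<in>Q. card V = c}" using nlo by auto
    then show "cntnm c lo (insert {lo} Q) = cnt c Q" unfolding cntnm_def cnt_def by simp
  qed simp
  finally show "(\<Sum>P\<in>EXs k lo hi 1. cntnm c lo P) = (\<Sum>P\<in>NCS k {Suc lo..<hi}. cnt c P)" .
qed

lemma cnt_EXs:
  assumes P: "P \<in> EXs k lo hi r"
  shows "cnt c P = cntnm c lo P + (if r = c then 1 else 0)"
proof -
  define B where "B = blk P lo"
  have B: "B \<in> P" "lo \<in> B" "card B = r" using EXsE(3,4,5)[OF P] unfolding B_def by auto
  have u: "\<And>V. V \<in> P \<Longrightarrow> lo \<in> V \<Longrightarrow> V = B" using part_uniq[OF EXsE(1)[OF P] _ B(1) _ B(2)] by blast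
  have fin: "finite P" using part_finite[OF EXsE(1)[OF P]] by simp
  define A where "A = {V\<in>P. lo \<notin> V \<and> card V = c}"
  have fA: "finite A" unfolding A_def using fin by simp
  have BA: "B \<notin> A" unfolding A_def using B(2) by simp
  show ?thesis
  proof (cases "r = c")
    case True
    have "{V\<in>P. card V = c} = insert B A" unfolding A_def using u B True by blast
    then show ?thesis unfolding cnt_def cntnm_def A_def[symmetric] using fA BA True by simp
  next
    case False
    have "{V\<in>P. card V = c} = A" unfolding A_def using u B False by blast
    then show ?thesis unfolding cnt_def cntnm_def A_def[symmetric] using False by simp
  qed
qed

lemma NCS_decomp:
  assumes k: "k > 0" and N: "N > 0"
  shows "NCS k {lo..<lo+N} = (\<Union>j\<in>{1..N}. EXs k lo (lo+N) (j*k))"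
proof (intro set_eqI iffI)
  fix P assume P: "P \<in> NCS k {lo..<lo+N}"
  have pP: "is_partition P {lo..<lo+N}" and ncP: "non_crossing P" and dP: "\<forall>B\<in>P. k dvd card B"
    using P unfolding NCS_def by auto
  obtain B where B: "B \<in> P" "lo \<in> B" using part_cover[OF pP] N by fastforce
  have sub: "B \<subseteq> {lo..<lo+N}" using part_sub[OF pP B(1)] .
  have fB: "finite B" using sub finite_subset by blast
  have "card B > 0" using fB B(2) card_gt_0_iff by blast
  moreover have "card B \<le> N" using card_mono[OF _ sub] by simp
  moreover obtain j where j: "card B = j * k" using dP B(1) by (metis dvd_def mult.commute)
  ultimately have "j \<ge> 1" "j \<le> N"
    using k by (simp_all, metis le_trans mult_le_mono1 mult_1 mult.commute One_nat_def Suc_leI)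
  moreover have "P \<in> EXs k lo (lo+N) (j*k)"
    by (rule EXsI[OF pP ncP B j]) (use dP in blast)
  ultimately show "P \<in> (\<Union>j\<in>{1..N}. EXs k lo (lo+N) (j*k))" by auto
next
  fix P assume "P \<in> (\<Union>j\<in>{1..N}. EXs k lo (lo+N) (j*k))"
  then obtain j where P: "P \<in> EXs k lo (lo+N) (j*k)" by blast
  have "\<forall>B\<in>P. k dvd card B"
  proof
    fix B assume "B \<in> P"
    show "k dvd card B"
    proof (cases "B = blk P lo")
      case True then show ?thesis using EXsE(5)[OF P] by simp
    next
      case False then show ?thesis using EXsE(6)[OF P \<open>B \<in> P\<close>] by simp
    qed
  qed
  then show "P \<in> NCS k {lo..<lo+N}" unfolding NCS_def using EXsE(1,2)[OF P] by blast
qed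

lemma NCS_count:
  assumes k: "k > 0" and N: "N > 0"
  shows "card (NCS k {lo..<lo+N}) = (\<Sum>j\<in>{1..N}. card (EXs k lo (lo+N) (j*k)))"
    "(\<Sum>P\<in>NCS k {lo..<lo+N}. cnt (t*k) P) = (\<Sum>j\<in>{1..N}. (if j = t then card (EXs k lo (lo+N) (j*k)) else 0) + (\<Sum>P\<in>EXs k lo (lo+N) (j*k). cntnm (t*k) lo P))"
proof -
  have D: "\<forall>i\<in>{1..N}. \<forall>j\<in>{1..N}. i \<noteq> j \<longrightarrow> EXs k lo (lo+N) (i*k) \<inter> EXs k lo (lo+N) (j*k) = {}"
  proof (intro ballI impI)
    fix i j assume "i \<in> {1..N}" "j \<in> {1..N}" "i \<noteq> j"
    show "EXs k lo (lo+N) (i*k) \<inter> EXs k lo (lo+N) (j*k) = {}"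
    proof (rule ccontr)
      assume "EXs k lo (lo+N) (i*k) \<inter> EXs k lo (lo+N) (j*k) \<noteq> {}"
      then obtain P where "P \<in> EXs k lo (lo+N) (i*k)" "P \<in> EXs k lo (lo+N) (j*k)" by blast
      then have "i * k = j * k" using EXsE(5) by metis
      then show False using k \<open>i \<noteq> j\<close> by simp
    qed
  qed
  have F: "\<forall>j\<in>{1..N}. finite (EXs k lo (lo+N) (j*k))" using EXs_finite by blast
  show "card (NCS k {lo..<lo+N}) = (\<Sum>j\<in>{1..N}. card (EXs k lo (lo+N) (j*k)))"
    unfolding NCS_decomp[OF k N] by (rule card_UN_disjoint[OF _ F D]) simp
  have "(\<Sum>P\<in>NCS k {lo..<lo+N}. cnt (t*k) P) = (\<Sum>j\<in>{1..N}. \<Sum>P\<in>EXs k lo (lo+N) (j*k). cnt (t*k) P)"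
    unfolding NCS_decomp[OF k N] by (rule sum.UNION_disjoint[OF _ F D]) simp
  also have "\<dots> = (\<Sum>j\<in>{1..N}. (if j = t then card (EXs k lo (lo+N) (j*k)) else 0) + (\<Sum>P\<in>EXs k lo (lo+N) (j*k). cntnm (t*k) lo P))"
  proof (rule sum.cong)
    fix j assume "j \<in> {1..N}"
    have "(\<Sum>P\<in>EXs k lo (lo+N) (j*k). cnt (t*k) P) = (\<Sum>P\<in>EXs k lo (lo+N) (j*k). cntnm (t*k) lo P + (if j*k = t*k then 1 else 0))"
      by (rule sum.cong) (simp_all add: cnt_EXs)
    also have "\<dots> = (\<Sum>P\<in>EXs k lo (lo+N) (j*k). cntnm (t*k) lo P) + (if j = t then card (EXs k lo (lo+N) (j*k)) else 0)"
      using k by (simp add: sum.distrib)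
    finally show "(\<Sum>P\<in>EXs k lo (lo+N) (j*k). cnt (t*k) P) = (if j = t then card (EXs k lo (lo+N) (j*k)) else 0) + (\<Sum>P\<in>EXs k lo (lo+N) (j*k). cntnm (t*k) lo P)"
      by simp
  qed simp
  finally show "(\<Sum>P\<in>NCS k {lo..<lo+N}. cnt (t*k) P) = (\<Sum>j\<in>{1..N}. (if j = t then card (EXs k lo (lo+N) (j*k)) else 0) + (\<Sum>P\<in>EXs k lo (lo+N) (j*k). cntnm (t*k) lo P))" .
qed

theorem theorem1:
  fixes k n t :: nat
  assumes "k > 0" and "n > 0" and "t > 0"
  shows "(\<Sum>P\<in>NCk k n. card {V\<in>P. card V = t * k})
           = (if t + 1 \<le> n * (k + 1) then (n * (k + 1) - t - 1) choose (n * k - 1) else 0)"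
proof -
  note k = assms(1) and n = assms(2) and t = assms(3)
  define E where "E = (\<lambda>lo N r. card (EXs k lo (lo+N) r))"
  define X where "X = (\<lambda>lo N r. \<Sum>P\<in>EXs k lo (lo+N) r. cntnm (t*k) lo P)"
  define f where "f = (\<lambda>lo N. card (NCS k {lo..<lo+N}))"
  define M where "M = (\<lambda>lo N. \<Sum>P\<in>NCS k {lo..<lo+N}. cnt (t*k) P)"
  have R0: "\<And>lo N r. N < r \<Longrightarrow> E lo N r = 0" unfolding E_def using EXs_big by simp
  have R0X: "\<And>lo N r. N < r \<Longrightarrow> X lo N r = 0" unfolding X_def using EXs_big by simp
  have R1: "\<And>lo N p q. p > 0 \<Longrightarrow> q > 0 \<Longrightarrow> E lo N (p+q) = (\<Sum>i\<in>{1..<N}. E lo i p * E (lo+i) (N-i) q)"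
  proof -
    fix lo N p q :: nat assume "p > 0" "q > 0"
    have "E lo N (p+q) = (\<Sum>i\<in>{1..<N}. card (EXs k lo (lo+i) p) * card (EXs k (lo+i) (lo+N) q))"
      unfolding E_def by (rule split_count(1)[OF \<open>p > 0\<close> \<open>q > 0\<close>])
    also have "\<dots> = (\<Sum>i\<in>{1..<N}. E lo i p * E (lo+i) (N-i) q)"
      unfolding E_def by (rule sum.cong) auto
    finally show "E lo N (p+q) = (\<Sum>i\<in>{1..<N}. E lo i p * E (lo+i) (N-i) q)" .
  qed
  have R4: "\<And>lo N p q. p > 0 \<Longrightarrow> q > 0 \<Longrightarrow> X lo N (p+q) = (\<Sum>i\<in>{1..<N}. X lo i p * E (lo+i) (N-i) q + E lo i p * X (lo+i) (N-i) q)"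
  proof -
    fix lo N p q :: nat assume "p > 0" "q > 0"
    have "X lo N (p+q) = (\<Sum>i\<in>{1..<N}.
        (\<Sum>P\<in>EXs k lo (lo+i) p. cntnm (t*k) lo P) * card (EXs k (lo+i) (lo+N) q)
      + card (EXs k lo (lo+i) p) * (\<Sum>P\<in>EXs k (lo+i) (lo+N) q. cntnm (t*k) (lo+i) P))"
      unfolding X_def by (rule split_count(2)[OF \<open>p > 0\<close> \<open>q > 0\<close>])
    also have "\<dots> = (\<Sum>i\<in>{1..<N}. X lo i p * E (lo+i) (N-i) q + E lo i p * X (lo+i) (N-i) q)"
      unfolding E_def X_def by (rule sum.cong) auto
    finally show "X lo N (p+q) = (\<Sum>i\<in>{1..<N}. X lo i p * E (lo+i) (N-i) q + E lo i p * X (lo+i) (N-i) q)" .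
  qed
  have R2: "\<And>lo N. E lo (Suc N) 1 = f (Suc lo) N"
    unfolding E_def f_def using single_count(1) by simp
  have R5: "\<And>lo N. X lo (Suc N) 1 = M (Suc lo) N"
    unfolding X_def M_def using single_count(2) by simp
  have R3a: "\<And>lo. f lo 0 = 1" unfolding f_def by (simp add: NCS_empty)
  have R6a: "\<And>lo. M lo 0 = 0" unfolding M_def by (simp add: NCS_empty cnt_def)
  have R3: "\<And>lo N. N > 0 \<Longrightarrow> f lo N = (\<Sum>j\<in>{1..N}. E lo N (j*k))"
    unfolding f_def E_def using NCS_count(1)[OF k] by simp
  have R6: "\<And>lo N. N > 0 \<Longrightarrow> M lo N = (\<Sum>j\<in>{1..N}. (if j = t then E lo N (j*k) else 0) + X lo N (j*k))"
    unfolding M_def E_def X_def using NCS_count(2)[OF k] by simp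
  have main: "\<forall>lo r. r > 0 \<longrightarrow> int (E lo (Suc (k*n)) r) = phi k (Suc (k*n)) r \<and> int (X lo (Suc (k*n)) r) = psi k (t*k - 1) (Suc (k*n)) r"
    by (rule alg_main[OF k t R0 R0X R1 R2 R3a R3 R4 R5 R6a R6])
  have "int (X 0 (Suc (k*n)) 1) = psi k (t*k - 1) (Suc (k*n)) 1" using main by simp
  moreover have "X 0 (Suc (k*n)) 1 = (\<Sum>P\<in>NCk k n. card {V\<in>P. card V = t * k})"
  proof -
    have "X 0 (Suc (k*n)) 1 = M 1 (k*n)" using R5[of 0 "k*n"] by simp
    moreover have "NCk k n = NCS k {1..<1+k*n}"
      unfolding NCk_def NCS_def by (simp add: atLeastLessThanSuc_atLeastAtMost)
    ultimately show ?thesis unfolding M_def cnt_def by simp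
  qed
  ultimately have L: "int (\<Sum>P\<in>NCk k n. card {V\<in>P. card V = t * k}) = psi k (t*k - 1) (Suc (k*n)) 1" by simp
  show ?thesis
  proof (cases "t \<le> n")
    case True
    then obtain d where d: "n = t + d" using le_Suc_ex by blast
    define e where "e = t*k - 1"
    have Se: "Suc e = t*k" using k t unfolding e_def by simp
    have "Suc (k*n) = 1 + Suc e + d*k" using d Se by (simp add: algebra_simps)
    then have "psi k e (Suc (k*n)) 1 = HH k e 1 d" using psi_eq[OF k, where r=1 and e=e and m=d] by simp
    also have "\<dots> = int ((d*(k+1) + e) choose d)" unfolding HH_def by simp
    finally have P: "psi k e (Suc (k*n)) 1 = int ((d*(k+1) + e) choose d)" .
    have c1: "t + 1 \<le> n * (k+1)"
    proof -
      have "1 \<le> k * n" using k n by simp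
      moreover have "n * (k+1) = k*n + n" by (simp add: algebra_simps)
      ultimately show ?thesis using True by linarith
    qed
    have T: "n * (k + 1) - t - 1 = d*(k+1) + e" using d Se by (simp add: algebra_simps)
    have T2: "n * k - 1 = (d*(k+1) + e) - d" using d Se by (simp add: algebra_simps)
    have "((d*(k+1) + e) choose d) = ((d*(k+1) + e) choose ((d*(k+1) + e) - d))"
      by (rule binomial_symmetric) simp
    then have "int (\<Sum>P\<in>NCk k n. card {V\<in>P. card V = t * k}) = int ((n * (k + 1) - t - 1) choose (n * k - 1))"
      using L P T T2 unfolding e_def by simp
    then have "(\<Sum>P\<in>NCk k n. card {V\<in>P. card V = t * k}) = (n * (k + 1) - t - 1) choose (n * k - 1)"
      by (simp only: of_nat_eq_iff)
    then show ?thesis using c1 by simp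
  next
    case False
    have "\<not> (\<exists>m. Suc (k*n) = 1 + Suc (t*k - 1) + m*k)"
    proof
      assume "\<exists>m. Suc (k*n) = 1 + Suc (t*k - 1) + m*k"
      then obtain m where m: "Suc (k*n) = 1 + Suc (t*k - 1) + m*k" by blast
      have "Suc (t*k - 1) = t*k" using k t by simp
      then have "k*n = t*k + m*k" using m by simp
      moreover have "k*n < t*k" using False k by simp
      ultimately show False by simp
    qed
    then have "psi k (t*k - 1) (Suc (k*n)) 1 = 0" by (rule psi_none)
    then have "int (\<Sum>P\<in>NCk k n. card {V\<in>P. card V = t * k}) = int 0" using L by (simp only: of_nat_0)
    then have Z: "(\<Sum>P\<in>NCk k n. card {V\<in>P. card V = t * k}) = 0" by (simp only: of_nat_eq_iff)
    have "t + 1 \<le> n * (k + 1) \<Longrightarrow> n * (k + 1) - t - 1 < n * k - 1"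
    proof -
      assume a: "t + 1 \<le> n * (k + 1)"
      have "n * (k+1) = n*k + n" by (simp add: algebra_simps)
      then show ?thesis using False a by linarith
    qed
    then show ?thesis using Z by simp
  qed
qed

end
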